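(* Let $(G,N,\theta)_{\mathcal{H}}$ be a modular $\mathcal{H}$-triple, $E=\mathbb{F}_p[\theta]$, $\bar G=G/N$ acting on $E$ by $z^{gN}=z^{\sigma_g}$. Choose a representation $X$ affording $\theta$ realized over $E$, let $A$ be the associated $G$-algebra, choose a unitary embedding $\iota:A\to\mathrm{M}_{ms}(\mathbb{F}_p)$ and a function $Y:G\to\mathrm{GL}_{ms}(\mathbb{F}_p)$ with the properties below, and let $\bar\alpha\in\mathbf{Z}^2(\bar G,E^\times)$ be defined by $Y(g)Y(h)=Y(gh)\iota(\bar\alpha(gN,hN)1_A)$. Then the cohomology class $[\bar\alpha]\in\mathbf{H}^2(\bar G,E^\times)$ does not depend on the choices of $X$, $\iota$ and $Y$; it is determined by the $\mathcal{H}$-triple.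
   Context: $p$ prime; $F$ a sufficiently large finite field of characteristic $p$ (residue field of a $p$-modular system), $\mathcal{H}$ a group of automorphisms acting on $F$ and inducing all automorphisms of $F$. Modular $\mathcal{H}$-triple: $N\trianglelefteq G$ finite, $\theta\in\mathrm{IBr}(N)$ with $G$-stable $\mathcal{H}$-orbit. $E=\mathbb{F}_p[\theta]$: subfield of $F$ generated by reductions of values of $\theta$; $m=\theta(1)$, $s=[E:\mathbb{F}_p]$. For $g\in G$, $\sigma_g\in\mathrm{Gal}(E/\mathbb{F}_p)$ is the unique element such that $n\mapsto X(gng^{-1})^{\sigma_g}$ affords $\theta$ (it is independent of $X$, being the restriction of any $\tau\in\mathcal{H}$ with $\theta^\tau=\theta^{g^{-1}}$). Associated $G$-algebra: $A=\mathrm{M}_m(E)$ with $x^g=T_g^{-1}x^{\sigma_g}T_g$ where $X(gng^{-1})^{\sigma_g}=T_gX(n)T_g^{-1}$ for all $n$. Properties of $Y$: $Y(g)^{-1}\iota(x)Y(g)=\iota(x^g)$; $Y(n)=\iota(X(n))$ for $n\in N$; $Y(gn)=Y(g)Y(n)$, $Y(ng)=Y(n)Y(g)$. Then $Y(gh)^{-1}Y(g)Y(h)\in\iota(E^\times 1_A)$ and the resulting $\alpha(g,h)\in E^\times$ depends only on the cosets $gN,hN$, giving $\bar\alpha$. Factor sets $\beta\in\mathbf{Z}^2(\bar G,E^\times)$ satisfy $\beta(xy,z)\beta(x,y)^z=\beta(x,yz)\beta(y,z)$; $\beta,\beta'$ are cohomologous if $\beta'(x,y)=\beta(x,y)\gamma(x)^y\gamma(y)\gamma(xy)^{-1}$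 for some $\gamma:\bar G\to E^\times$; $\mathbf{H}^2$ is the group of classes. *)

theory Defs
  imports "HOL-Algebra.Coset" "Jordan_Normal_Form.Matrix"
begin

definition prime_subfield :: "'f::field set" where
  "prime_subfield = range of_nat"

definition subfield :: "'f::field set \<Rightarrow> bool" where
  "subfield K \<longleftrightarrow> 0 \<in> K \<and> 1 \<in> K \<and>
     (\<forall>x\<in>K. \<forall>y\<in>K. x + y \<in> K \<and> x * y \<in> K) \<and>
     (\<forall>x\<in>K. - x \<in> K \<and> inverse x \<in> K)"

definition generated_subfield :: "'f::field set \<Rightarrow> 'f set" where
  "generated_subfield S = \<Inter>{K. subfield K \<and> S \<subseteq> K}"

definition mat_trace :: "'f::field mat \<Rightarrow> 'f" where
  "mat_trace M = (\<Sum>i<dim_row M. M $$ (i, i))"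

definition mats_over :: "'f set \<Rightarrow> nat \<Rightarrow> nat \<Rightarrow> 'f::field mat set" where
  "mats_over K r c = {M \<in> carrier_mat r c. \<forall>i<r. \<forall>j<c. M $$ (i, j) \<in> K}"

definition field_aut :: "'f::field set \<Rightarrow> ('f \<Rightarrow> 'f) \<Rightarrow> bool" where
  "field_aut E \<sigma> \<longleftrightarrow> bij_betw \<sigma> E E \<and>
     (\<forall>x\<in>E. \<forall>y\<in>E. \<sigma> (x + y) = \<sigma> x + \<sigma> y \<and> \<sigma> (x * y) = \<sigma> x * \<sigma> y)"

definition mat_rep :: "('g, 'b) monoid_scheme \<Rightarrow> nat \<Rightarrow> ('g \<Rightarrow> 'f::field mat) \<Rightarrow> bool" where
  "mat_rep H d X \<longleftrightarrow> (\<forall>h\<in>carrier H. X h \<in> carrier_mat d d) \<and> X \<one>\<^bsub>H\<^esub> = 1\<^sub>m d \<and>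
     (\<forall>a\<in>carrier H. \<forall>b\<in>carrier H. X (a \<otimes>\<^bsub>H\<^esub> b) = X a * X b)"

definition rep_equiv :: "('g, 'b) monoid_scheme \<Rightarrow> nat \<Rightarrow> ('g \<Rightarrow> 'f::field mat) \<Rightarrow> ('g \<Rightarrow> 'f mat) \<Rightarrow> bool" where
  "rep_equiv H d X X' \<longleftrightarrow> (\<exists>P Pi. P \<in> carrier_mat d d \<and> Pi \<in> carrier_mat d d \<and>
     P * Pi = 1\<^sub>m d \<and> Pi * P = 1\<^sub>m d \<and> (\<forall>h\<in>carrier H. X' h = P * X h * Pi))"

definition invariant_subspace :: "('g, 'b) monoid_scheme \<Rightarrow> nat \<Rightarrow> ('g \<Rightarrow> 'f::field mat) \<Rightarrow> 'f vec set \<Rightarrow> bool" where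
  "invariant_subspace H d X W \<longleftrightarrow> W \<subseteq> carrier_vec d \<and> 0\<^sub>v d \<in> W \<and>
     (\<forall>v\<in>W. \<forall>w\<in>W. v + w \<in> W) \<and> (\<forall>c. \<forall>w\<in>W. c \<cdot>\<^sub>v w \<in> W) \<and>
     (\<forall>h\<in>carrier H. \<forall>w\<in>W. X h *\<^sub>v w \<in> W)"

definition irreducible_rep :: "('g, 'b) monoid_scheme \<Rightarrow> nat \<Rightarrow> ('g \<Rightarrow> 'f::field mat) \<Rightarrow> bool" where
  "irreducible_rep H d X \<longleftrightarrow> mat_rep H d X \<and> 0 < d \<and>
     (\<forall>W. invariant_subspace H d X W \<longrightarrow> W = {0\<^sub>v d} \<or> W = carrier_vec d)"

text \<open>F is "sufficiently large": a splitting field for all subgroups of G, i.e. every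
  F-irreducible representation of a subgroup is absolutely irreducible (its commutant is F).\<close>
definition splitting_field :: "'f::field itself \<Rightarrow> ('g, 'b) monoid_scheme \<Rightarrow> bool" where
  "splitting_field T G \<longleftrightarrow> (\<forall>H d (R :: 'g \<Rightarrow> 'f mat). subgroup H G \<longrightarrow>
      irreducible_rep (G\<lparr>carrier := H\<rparr>) d R \<longrightarrow>
      (\<forall>C\<in>carrier_mat d d. (\<forall>h\<in>H. C * R h = R h * C) \<longrightarrow> (\<exists>c. C = c \<cdot>\<^sub>m 1\<^sub>m d)))"

text \<open>Unitary (unital) embedding of the F_p-algebra A = M_m(E) into M_{ms}(F_p).\<close>
definition unital_embedding :: "'f::field set \<Rightarrow> nat \<Rightarrow> nat \<Rightarrow> ('f mat \<Rightarrow> 'f mat) \<Rightarrow> bool" where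
  "unital_embedding E m s \<iota> \<longleftrightarrow> inj_on \<iota> (mats_over E m m) \<and>
     \<iota> ` mats_over E m m \<subseteq> mats_over prime_subfield (m * s) (m * s) \<and>
     \<iota> (1\<^sub>m m) = 1\<^sub>m (m * s) \<and>
     (\<forall>x\<in>mats_over E m m. \<forall>y\<in>mats_over E m m. \<iota> (x + y) = \<iota> x + \<iota> y \<and> \<iota> (x * y) = \<iota> x * \<iota> y) \<and>
     (\<forall>c\<in>prime_subfield. \<forall>x\<in>mats_over E m m. \<iota> (c \<cdot>\<^sub>m x) = c \<cdot>\<^sub>m \<iota> x)"

text \<open>The G-algebra action on A is
  x^g = T_g^{-1} x^{\<sigma>_g} T_g where X(g n g^{-1})^{\<sigma>_g} = T_g X(n) T_g^{-1};
  Y(g)^{-1} \<iota>(x) Y(g) = \<iota>(x^g) is written as \<iota>(x) Y(g) = Y(g) \<iota>(x^g).\<close>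
definition Y_function :: "('g, 'b) monoid_scheme \<Rightarrow> 'g set \<Rightarrow> 'f::field set \<Rightarrow> nat \<Rightarrow> nat \<Rightarrow>
    ('g \<Rightarrow> 'f \<Rightarrow> 'f) \<Rightarrow> ('g \<Rightarrow> 'f mat) \<Rightarrow> ('f mat \<Rightarrow> 'f mat) \<Rightarrow> ('g \<Rightarrow> 'f mat) \<Rightarrow> bool" where
  "Y_function G N E m s sig X \<iota> Y \<longleftrightarrow>
     (\<forall>g\<in>carrier G. Y g \<in> mats_over prime_subfield (m * s) (m * s) \<and> invertible_mat (Y g)) \<and>
     (\<forall>g\<in>carrier G. \<exists>T Ti. T \<in> mats_over E m m \<and> Ti \<in> mats_over E m m \<and>
         T * Ti = 1\<^sub>m m \<and> Ti * T = 1\<^sub>m m \<and>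
         (\<forall>n\<in>N. map_mat (sig g) (X (g \<otimes>\<^bsub>G\<^esub> n \<otimes>\<^bsub>G\<^esub> inv\<^bsub>G\<^esub> g)) * T = T * X n) \<and>
         (\<forall>x\<in>mats_over E m m. \<iota> x * Y g = Y g * \<iota> (Ti * map_mat (sig g) x * T))) \<and>
     (\<forall>n\<in>N. Y n = \<iota> (X n)) \<and>
     (\<forall>g\<in>carrier G. \<forall>n\<in>N. Y (g \<otimes>\<^bsub>G\<^esub> n) = Y g * Y n \<and> Y (n \<otimes>\<^bsub>G\<^esub> g) = Y n * Y g)"

end

theory Submission imports Defs "HOL-Computational_Algebra.Polynomial" "HOL-Computational_Algebra.Primes" begin

section \<open>Subfields\<close>

lemma subfieldD:
  assumes "subfield K"
  shows "0 \<in> K" "1 \<in> K" "\<And>x y. x \<in> K \<Longrightarrow> y \<in> K \<Longrightarrow> x + y \<in> K"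
    "\<And>x y. x \<in> K \<Longrightarrow> y \<in> K \<Longrightarrow> x * y \<in> K"
    "\<And>x. x \<in> K \<Longrightarrow> - x \<in> K" "\<And>x. x \<in> K \<Longrightarrow> inverse x \<in> K"
  using assms unfolding subfield_def by auto

lemma subfield_diff: "subfield K \<Longrightarrow> x \<in> K \<Longrightarrow> y \<in> K \<Longrightarrow> x - y \<in> K"
  using subfieldD[of K] by (metis diff_conv_add_uminus)

lemma subfield_divide: "subfield K \<Longrightarrow> x \<in> K \<Longrightarrow> y \<in> K \<Longrightarrow> x / y \<in> K"
  using subfieldD[of K] by (metis divide_inverse)

lemma subfield_sum: "subfield K \<Longrightarrow> (\<And>i. i \<in> A \<Longrightarrow> f i \<in> K) \<Longrightarrow> sum f A \<in> K"
  by (induction A rule: infinite_finite_induct) (auto simp: subfieldD)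

lemma subfield_prod: "subfield K \<Longrightarrow> (\<And>i. i \<in> A \<Longrightarrow> f i \<in> K) \<Longrightarrow> prod f A \<in> K"
  by (induction A rule: infinite_finite_induct) (auto simp: subfieldD)

lemma subfield_power: "subfield K \<Longrightarrow> x \<in> K \<Longrightarrow> x ^ n \<in> K"
  by (induction n) (auto simp: subfieldD)

lemma subfield_of_nat: "subfield K \<Longrightarrow> of_nat n \<in> K"
  by (induction n) (auto simp: subfieldD)

lemma prime_subfield_sub: "subfield K \<Longrightarrow> prime_subfield \<subseteq> K"
  unfolding prime_subfield_def using subfield_of_nat by blast

lemma subfield_generated: "subfield (generated_subfield S)"
  unfolding generated_subfield_def subfield_def by auto

lemma subfield_UNIV: "subfield UNIV" unfolding subfield_def by auto

lemma prime_subfield_add: "(x::'f::field) \<in> prime_subfield \<Longrightarrow> y \<in> prime_subfield \<Longrightarrow> x + y \<in> prime_subfield"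
  unfolding prime_subfield_def by (auto, metis of_nat_add rangeI)

lemma prime_subfield_mult: "(x::'f::field) \<in> prime_subfield \<Longrightarrow> y \<in> prime_subfield \<Longrightarrow> x * y \<in> prime_subfield"
  unfolding prime_subfield_def by (auto, metis of_nat_mult rangeI)

lemma prime_subfield_0: "0 \<in> prime_subfield" and prime_subfield_1: "1 \<in> prime_subfield"
  unfolding prime_subfield_def by (metis of_nat_0 rangeI, metis of_nat_1 rangeI)

lemma prime_subfield_sum: "(\<And>i. i \<in> A \<Longrightarrow> f i \<in> prime_subfield) \<Longrightarrow> sum f A \<in> prime_subfield"
  by (induction A rule: infinite_finite_induct) (auto simp: prime_subfield_0 prime_subfield_add)

section \<open>Finite fields\<close>

lemma CHAR_eq_p:
  assumes "prime p" "of_nat p = (0::'f::field)"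
  shows "CHAR('f) = p"
proof -
  have "CHAR('f) dvd p" using assms of_nat_eq_0_iff_char_dvd by blast
  moreover have "CHAR('f) \<noteq> 1" by simp
  ultimately show ?thesis using assms(1) by (meson prime_nat_iff)
qed

lemma card_prime_subfield:
  assumes "prime p" "of_nat p = (0::'f::field)"
  shows "card (prime_subfield :: 'f set) = p"
proof -
  have C: "CHAR('f) = p" using CHAR_eq_p[OF assms] .
  have "prime_subfield = (of_nat ` {..<p} :: 'f set)"
  proof
    show "prime_subfield \<subseteq> (of_nat ` {..<p} :: 'f set)"
    proof
      fix x :: 'f assume "x \<in> prime_subfield"
      then obtain k where k: "x = of_nat k" unfolding prime_subfield_def by auto
      have "k = p * (k div p) + k mod p" by simp
      hence "(of_nat k :: 'f) = of_nat p * of_nat (k div p) + of_nat (k mod p)"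
        by (metis of_nat_add of_nat_mult)
      hence "x = of_nat (k mod p)" using k assms by simp
      moreover have "k mod p < p" using assms(1) prime_gt_0_nat by auto
      ultimately show "x \<in> of_nat ` {..<p}" by auto
    qed
  qed (auto simp: prime_subfield_def)
  moreover have "inj_on (of_nat :: nat \<Rightarrow> 'f) {..<p}"
  proof
    fix i j assume ij: "i \<in> {..<p}" "j \<in> {..<p}" "(of_nat i :: 'f) = of_nat j"
    show "i = j"
    proof (rule ccontr)
      assume "i \<noteq> j"
      then consider "i < j" | "j < i" by linarith
      thus False
      proof cases
        case 1
        hence "p dvd (j - i)" using of_nat_eq_iff_char_dvd[OF 1] ij C by metis
        thus False using 1 ij by (simp add: nat_dvd_not_less)
      next
        case 2
        hence "p dvd (i - j)" using of_nat_eq_iff_char_dvd[OF 2] ij C by metis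
        thus False using 2 ij by (simp add: nat_dvd_not_less)
      qed
    qed
  qed
  ultimately show ?thesis by (metis card_image card_lessThan)
qed

lemma subfield_pow_card:
  fixes x :: "'f::field"
  assumes K: "subfield K" "finite K" and x: "x \<in> K"
  shows "x ^ card K = x"
proof (cases "x = 0")
  case True
  have "card K > 0" using K subfieldD(1)[OF K(1)] card_gt_0_iff by blast
  thus ?thesis using True by simp
next
  case False
  have ck: "card K > 0" using K subfieldD(1)[OF K(1)] card_gt_0_iff by blast
  have "(\<Prod>y\<in>K-{0}. x * y) = x ^ card (K - {0}) * \<Prod>(K-{0})"
    by (simp add: prod.distrib)
  also have "card (K - {0}) = card K - 1" using K subfieldD(1)[OF K(1)] by simp
  also have "(\<Prod>y\<in>K-{0}. x * y) = (\<Prod>y\<in>K-{0}. y)"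
    by (rule prod.reindex_bij_witness[of _ "\<lambda>y. y / x" "\<lambda>y. x * y"])
       (use False x K in \<open>auto simp: subfieldD subfield_divide\<close>)
  finally have "x ^ (card K - 1) = 1"
    using K by (simp add: prod_zero_iff)
  hence "x * x ^ (card K - 1) = x" by simp
  thus ?thesis using ck by (metis Suc_diff_1 power_Suc)
qed

lemma card_subfield_ge2: "subfield K \<Longrightarrow> finite K \<Longrightarrow> card (K::'f::field set) \<ge> 2"
proof -
  assume "subfield K" "finite K"
  hence "{0,1} \<subseteq> K" using subfieldD by auto
  hence "card {0::'f,1} \<le> card K" using \<open>finite K\<close> card_mono by blast
  thus ?thesis by simp
qed

lemma subfield_eq_roots:
  fixes K :: "'f::field set"
  assumes K: "subfield K" "finite K"
  shows "{z. z ^ card K = z} = K"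
proof -
  let ?q = "card K"
  have q2: "?q \<ge> 2" using card_subfield_ge2 K by blast
  let ?P = "monom (1::'f) ?q - [:0, 1:]"
  have c01: "coeff [:0::'f, 1:] ?q = 0" using q2 by (cases ?q) (auto simp: coeff_pCons split: nat.split)
  have coeffq: "coeff ?P ?q = 1" unfolding coeff_diff coeff_monom c01 by simp
  hence P0: "?P \<noteq> 0" by (metis coeff_0 zero_neq_one)
  have degP: "degree ?P \<le> ?q"
    by (rule degree_diff_le) (use q2 in \<open>auto simp: degree_monom_le\<close>)
  have roots: "{z::'f. z ^ ?q = z} = {x. poly ?P x = 0}"
    by (auto simp: poly_monom)
  have fin0: "finite {x. poly ?P x = 0}" by (rule poly_roots_finite[OF P0])
  have fin: "finite {z::'f. z ^ ?q = z}" unfolding roots by (rule poly_roots_finite[OF P0])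
  have "card {z::'f. z ^ ?q = z} \<le> ?q"
    unfolding roots using card_poly_roots_bound[OF P0] degP by linarith
  moreover have "K \<subseteq> {z::'f. z ^ ?q = z}" using subfield_pow_card[OF K] by auto
  ultimately show ?thesis using fin by (metis card_seteq)
qed

lemma frob_add:
  fixes a b :: "'f::field"
  assumes "prime CHAR('f)" "q = CHAR('f) ^ s"
  shows "(a + b) ^ (q ^ k) = a ^ (q ^ k) + b ^ (q ^ k)"
  using freshmans_dream'[OF assms(1), of "q ^ k" "s * k"] assms(2) by (simp add: power_mult)

lemma frob_diff:
  fixes a b :: "'f::field"
  assumes "prime CHAR('f)" "q = CHAR('f) ^ s"
  shows "(a - b) ^ (q ^ k) = a ^ (q ^ k) - b ^ (q ^ k)"
  using frob_add[OF assms, of "a - b" b k] by (simp add: algebra_simps)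

lemma frob_sum:
  fixes f :: "'b \<Rightarrow> 'f::field"
  assumes "prime CHAR('f)" "q = CHAR('f) ^ s"
  shows "(sum f A) ^ (q ^ k) = (\<Sum>i\<in>A. f i ^ (q ^ k))"
  using freshmans_dream_sum'[OF assms(1), of "q ^ k" "s * k" f A] assms(2) by (simp add: power_mult)

lemma frob_inj:
  fixes a b :: "'f::field"
  assumes "prime CHAR('f)" "q = CHAR('f) ^ s" "a ^ (q ^ k) = b ^ (q ^ k)"
  shows "a = b"
proof -
  have "(a - b) ^ (q ^ k) = 0" using frob_diff[OF assms(1,2)] assms(3) by simp
  thus ?thesis by simp
qed

lemma frob_surj:
  fixes w :: "'f::{field,finite}"
  assumes "prime CHAR('f)" "q = CHAR('f) ^ s"
  shows "\<exists>z. z ^ (q ^ k) = w"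
proof -
  have "inj (\<lambda>z::'f. z ^ (q ^ k))" using frob_inj[OF assms] by (auto intro: injI)
  hence "surj (\<lambda>z::'f. z ^ (q ^ k))" using finite_UNIV_inj_surj[OF finite_UNIV] by blast
  thus ?thesis by (metis surjD)
qed

lemma frob_shift:
  fixes w :: "'f::{field,finite}"
  assumes "prime CHAR('f)" "q = CHAR('f) ^ s" "i \<le> j" "\<forall>z::'f. z ^ (q ^ i) = z ^ (q ^ j)"
  shows "w ^ (q ^ (j - i)) = w"
proof -
  obtain z where z: "z ^ (q ^ i) = w" using frob_surj[OF assms(1,2)] by blast
  have "w ^ (q ^ (j - i)) = z ^ (q ^ i * q ^ (j - i))" using z by (simp add: power_mult)
  also have "q ^ i * q ^ (j - i) = q ^ j" using assms(3) by (simp flip: power_add)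
  finally show ?thesis using z assms(4) by simp
qed

lemma exists_trace_map:
  fixes K :: "'f::{field,finite} set"
  assumes K: "subfield K" and p: "prime p" "of_nat p = (0::'f)" and cK: "card K = p ^ s"
  shows "\<exists>\<tau>. (\<forall>z. \<tau> z \<in> K) \<and> (\<forall>a b. \<tau> (a + b) = \<tau> a + \<tau> b) \<and>
            (\<forall>a. \<forall>e\<in>K. \<tau> (a * e) = \<tau> a * e) \<and> (\<exists>w. \<tau> w \<noteq> 0)"
proof -
  have C: "CHAR('f) = p" using CHAR_eq_p[OF p] .
  have pC: "prime CHAR('f)" using C p by simp
  define q where "q = card K"
  have qC: "q = CHAR('f) ^ s" using C cK q_def by simp
  have finK: "finite K" by simp
  have q2: "q \<ge> 2" unfolding q_def using card_subfield_ge2[OF K finK] .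
  have rootsK: "{z. z ^ q = z} = K" unfolding q_def using subfield_eq_roots[OF K finK] .
  have eK: "e ^ (q ^ k) = e" if "e \<in> K" for e k
  proof (induction k)
    case (Suc k)
    have "e ^ (q ^ Suc k) = (e ^ (q ^ k)) ^ q" by (metis power_Suc2 power_mult)
    thus ?case using Suc rootsK that by auto
  qed simp
  \<comment> \<open>period of the Frobenius\<close>
  define f where "f = (\<lambda>k::nat. (\<lambda>z::'f. z ^ (q ^ k)))"
  have "\<not> inj f"
  proof
    assume "inj f"
    hence "infinite (range f)" using finite_imageD infinite_UNIV_nat by blast
    thus False by simp
  qed
  then obtain i j where ij: "i < j" "f i = f j"
    unfolding inj_def by (metis linorder_neqE_nat)
  have "\<forall>z::'f. z ^ (q ^ (j - i)) = z"
    using frob_shift[OF pC qC, of i j] ij unfolding f_def by (metis less_imp_le)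
  hence exP: "\<exists>n. 0 < n \<and> (\<forall>z::'f. z ^ (q ^ n) = z)" using ij by (intro exI[of _ "j - i"]) auto
  define N where "N = (LEAST n. 0 < n \<and> (\<forall>z::'f. z ^ (q ^ n) = z))"
  have N: "0 < N" "\<forall>z::'f. z ^ (q ^ N) = z"
    using LeastI_ex[OF exP] unfolding N_def by auto
  have Nmin: "\<exists>z::'f. z ^ (q ^ n) \<noteq> z" if "0 < n" "n < N" for n
    using not_less_Least[of n "\<lambda>n. 0 < n \<and> (\<forall>z::'f. z ^ (q ^ n) = z)"] that unfolding N_def by auto
  have dist: "\<exists>z::'f. z ^ (q ^ k) \<noteq> z ^ (q ^ l)" if "k < l" "l < N" for k l
  proof (rule ccontr)
    assume "\<not> ?thesis"
    hence "\<forall>w::'f. w ^ (q ^ (l - k)) = w" using frob_shift[OF pC qC, of k l] that by auto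
    moreover have lk: "0 < l - k" "l - k < N" using that by auto
    moreover obtain z :: 'f where "z ^ (q ^ (l - k)) \<noteq> z" using Nmin[OF lk] by auto
    ultimately show False by blast
  qed
  define \<tau> where "\<tau> = (\<lambda>z::'f. \<Sum>k<N. z ^ (q ^ k))"
  have add: "\<tau> (a + b) = \<tau> a + \<tau> b" for a b
    unfolding \<tau>_def by (simp add: frob_add[OF pC qC] sum.distrib)
  have lin: "\<tau> (a * e) = \<tau> a * e" if "e \<in> K" for a e
    unfolding \<tau>_def by (simp add: power_mult_distrib eK[OF that] sum_distrib_right)
  have inK: "\<tau> z \<in> K" for z
  proof -
    have "\<tau> z ^ q = (\<Sum>k<N. (z ^ (q ^ k)) ^ (q ^ 1))"
      unfolding \<tau>_def using frob_sum[OF pC qC, of _ _ 1] by simp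
    also have "\<dots> = (\<Sum>k<N. z ^ (q ^ Suc k))" by (intro sum.cong refl) (metis power_Suc2 power_mult power_one_right)
    also have "\<dots> = \<tau> z"
    proof -
      have "(\<Sum>k<Suc N. z ^ (q ^ k)) = z ^ (q ^ 0) + (\<Sum>k<N. z ^ (q ^ Suc k))"
        by (rule sum.lessThan_Suc_shift)
      moreover have "(\<Sum>k<Suc N. z ^ (q ^ k)) = (\<Sum>k<N. z ^ (q ^ k)) + z ^ (q ^ N)" by simp
      ultimately show ?thesis unfolding \<tau>_def using N(2) by simp
    qed
    finally show ?thesis using rootsK by auto
  qed
  have nz: "\<exists>w. \<tau> w \<noteq> 0"
  proof (rule ccontr)
    assume all0: "\<not> ?thesis"
    define n where "n = card (UNIV :: 'f set)"
    have n2: "n \<ge> 2" unfolding n_def by (rule card_subfield_ge2[OF subfield_UNIV]) simp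
    have zn: "z ^ n = z" for z :: 'f
      unfolding n_def by (rule subfield_pow_card[OF subfield_UNIV]) simp_all
    define e where "e = (\<lambda>k. (q ^ k - 1) mod (n - 1) + 1)"
    have e_le: "e k \<le> n - 1" "e k \<ge> 1" for k
      unfolding e_def using n2 by (auto simp: Suc_le_eq)
    have pe: "z ^ (q ^ k) = z ^ e k" for z :: 'f and k
    proof (cases "z = 0")
      case True
      have "q ^ k > 0" using q2 by simp
      thus ?thesis using True e_le(2)[of k] by (simp add: zero_power)
    next
      case False
      have zn1: "z ^ (n - 1) = 1"
      proof -
        have "z * z ^ (n - 1) = z * 1" using zn[of z] n2 by (metis Suc_diff_1 mult.right_neutral
            le_add_diff_inverse2 nat_1_add_1 not_less_eq_eq plus_1_eq_Suc power_Suc zero_less_Suc less_le_trans)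
        thus ?thesis using False by simp
      qed
      have qk: "q ^ k = (q ^ k - 1) div (n - 1) * (n - 1) + (q ^ k - 1) mod (n - 1) + 1"
      proof -
        have "q ^ k \<ge> 1" using q2 by simp
        thus ?thesis using div_mult_mod_eq[of "q ^ k - 1" "n - 1"] by linarith
      qed
      obtain t where t: "q ^ k = t * (n - 1) + e k" using qk unfolding e_def by auto
      have "z ^ (q ^ k) = z ^ (t * (n - 1)) * z ^ (e k)" unfolding t by (rule power_add)
      also have "z ^ (t * (n - 1)) = 1" by (metis mult.commute power_mult power_one zn1)
      finally show ?thesis by simp
    qed
    have edist: "e k \<noteq> e l" if "k < l" "l < N" for k l
      using dist[OF that] pe by metis
    define P where "P = (\<Sum>k<N. monom (1::'f) (e k))"
    have polyP: "poly P z = \<tau> z" for z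
      unfolding P_def \<tau>_def by (simp add: poly_sum poly_monom pe)
    have coeffP: "coeff P i = (\<Sum>k<N. if e k = i then 1 else 0)" for i
      unfolding P_def by (simp add: coeff_sum coeff_monom)
    have "coeff P (e 0) = (\<Sum>k\<in>{0}. if e k = e 0 then 1 else 0)"
      unfolding coeffP
      by (rule sum.mono_neutral_right) (use N(1) edist[of 0] in \<open>fastforce+\<close>)
    hence "coeff P (e 0) = 1" by simp
    hence P0: "P \<noteq> 0" by auto
    have "degree P \<le> n - 1"
    proof (rule degree_le, intro allI impI)
      fix i assume "n - 1 < i"
      thus "coeff P i = 0" unfolding coeffP using e_le(1) by (intro sum.neutral) (metis leD)
    qed
    moreover have "{x. poly P x = 0} = UNIV" using all0 polyP by auto
    ultimately have "card (UNIV::'f set) \<le> n - 1" using card_poly_roots_bound[OF P0] by simp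
    thus False using n2 unfolding n_def by simp
  qed
  show ?thesis using inK add lin nz by blast
qed

section \<open>Vectors and matrices over subsets\<close>

definition vecs_over :: "'a set \<Rightarrow> nat \<Rightarrow> 'a vec set" where
  "vecs_over K n = {v \<in> carrier_vec n. \<forall>i<n. v $ i \<in> K}"

definition colmat :: "nat \<Rightarrow> 'a::zero vec \<Rightarrow> 'a mat" where
  "colmat m y = mat m m (\<lambda>(i,j). if j = 0 then y $ i else 0)"

lemma card_vecs_over:
  assumes "finite K"
  shows "card (vecs_over K n) = card K ^ n"
proof -
  have "bij_betw (\<lambda>v. \<lambda>i\<in>{..<n}. v $ i) (vecs_over K n) (PiE {..<n} (\<lambda>_. K))"
  proof (rule bij_betw_byWitness[where f' = "\<lambda>f. vec n f"])
    show "\<forall>a\<in>vecs_over K n. vec n (\<lambda>i\<in>{..<n}. a $ i) = a"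
      unfolding vecs_over_def by (auto intro!: eq_vecI)
    show "\<forall>a'\<in>PiE {..<n} (\<lambda>_. K). (\<lambda>i\<in>{..<n}. vec n a' $ i) = a'"
      by (auto simp: PiE_def extensional_def fun_eq_iff)
    show "(\<lambda>v. \<lambda>i\<in>{..<n}. v $ i) ` vecs_over K n \<subseteq> PiE {..<n} (\<lambda>_. K)"
    proof
      fix f assume "f \<in> (\<lambda>v. \<lambda>i\<in>{..<n}. v $ i) ` vecs_over K n"
      then obtain v where v: "v \<in> vecs_over K n" "f = (\<lambda>i\<in>{..<n}. v $ i)" by blast
      have "\<forall>i\<in>{..<n}. v $ i \<in> K" using v(1) unfolding vecs_over_def by auto
      thus "f \<in> PiE {..<n} (\<lambda>_. K)" unfolding v(2) by (simp add: restrict_PiE_iff)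
    qed
    show "(\<lambda>f. vec n f) ` PiE {..<n} (\<lambda>_. K) \<subseteq> vecs_over K n"
      unfolding vecs_over_def by (auto simp: PiE_def)
  qed
  hence "card (vecs_over K n) = card (PiE {..<n} (\<lambda>_. K))" by (rule bij_betw_same_card)
  also have "\<dots> = card K ^ n" by (simp add: card_PiE)
  finally show ?thesis .
qed

lemma unit_vec_in_vecs_over: "0 \<in> K \<Longrightarrow> 1 \<in> K \<Longrightarrow> k < n \<Longrightarrow> unit_vec n k \<in> vecs_over K n"
  unfolding vecs_over_def by auto

lemma mat_vec_unit: "(A::'a::field mat) \<in> carrier_mat r n \<Longrightarrow> k < n \<Longrightarrow> i < r \<Longrightarrow> (A *\<^sub>v unit_vec n k) $ i = A $$ (i, k)"
  by (simp add: row_def)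

lemma mat_eq_on_vecs:
  assumes "(A::'a::field mat) \<in> carrier_mat r n" "B \<in> carrier_mat r n" "0 \<in> K" "1 \<in> K"
    "\<And>w. w \<in> vecs_over K n \<Longrightarrow> A *\<^sub>v w = B *\<^sub>v w"
  shows "A = B"
proof (rule eq_matI)
  fix i k assume ik: "i < dim_row B" "k < dim_col B"
  have "A *\<^sub>v unit_vec n k = B *\<^sub>v unit_vec n k"
    using assms ik unit_vec_in_vecs_over[of K k n] by auto
  thus "A $$ (i, k) = B $$ (i, k)" using mat_vec_unit assms ik by (metis carrier_matD)
qed (use assms in auto)

lemma linear_map_matrix:
  fixes \<Theta> :: "'a::field vec \<Rightarrow> 'a vec"
  assumes K: "0 \<in> K" "1 \<in> K" "\<And>x y. x \<in> K \<Longrightarrow> y \<in> K \<Longrightarrow> x + y \<in> K"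
    "\<And>x y. x \<in> K \<Longrightarrow> y \<in> K \<Longrightarrow> x * y \<in> K"
  and into: "\<And>w. w \<in> vecs_over K n \<Longrightarrow> \<Theta> w \<in> vecs_over K n"
  and add: "\<And>a b. a \<in> vecs_over K n \<Longrightarrow> b \<in> vecs_over K n \<Longrightarrow> \<Theta> (a + b) = \<Theta> a + \<Theta> b"
  and hom: "\<And>c a. c \<in> K \<Longrightarrow> a \<in> vecs_over K n \<Longrightarrow> \<Theta> (c \<cdot>\<^sub>v a) = c \<cdot>\<^sub>v \<Theta> a"
  and w: "w \<in> vecs_over K n"
  shows "mat n n (\<lambda>(i,k). \<Theta> (unit_vec n k) $ i) *\<^sub>v w = \<Theta> w"
proof -
  define M where "M = mat n n (\<lambda>(i,k). \<Theta> (unit_vec n k) $ i)"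
  have Mc: "M \<in> carrier_mat n n" unfolding M_def by simp
  have uv: "unit_vec n k \<in> vecs_over K n" if "k < n" for k using unit_vec_in_vecs_over K that by blast
  have Mu: "M *\<^sub>v unit_vec n k = \<Theta> (unit_vec n k)" if "k < n" for k
  proof (rule eq_vecI)
    show "dim_vec (M *\<^sub>v unit_vec n k) = dim_vec (\<Theta> (unit_vec n k))"
      using into[OF uv[OF that]] Mc unfolding vecs_over_def by auto
    fix i assume "i < dim_vec (\<Theta> (unit_vec n k))"
    hence i: "i < n" using into[OF uv[OF that]] unfolding vecs_over_def by auto
    show "(M *\<^sub>v unit_vec n k) $ i = \<Theta> (unit_vec n k) $ i"
      using mat_vec_unit[OF Mc that i] i that unfolding M_def by simp
  qed
  define tr where "tr = (\<lambda>j. vec n (\<lambda>i. if i < j then w $ i else 0))"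
  have trV: "tr j \<in> vecs_over K n" for j
    using w K unfolding tr_def vecs_over_def by auto
  have zero: "\<Theta> (0\<^sub>v n) = 0\<^sub>v n"
  proof -
    have z: "0\<^sub>v n \<in> vecs_over K n" using K unfolding vecs_over_def by auto
    have "\<Theta> (0 \<cdot>\<^sub>v 0\<^sub>v n) = 0 \<cdot>\<^sub>v \<Theta> (0\<^sub>v n)" using hom[OF K(1) z] .
    moreover have "0 \<cdot>\<^sub>v (0\<^sub>v n :: 'a vec) = 0\<^sub>v n" by auto
    moreover have "0 \<cdot>\<^sub>v \<Theta> (0\<^sub>v n) = 0\<^sub>v n" using into[OF z] unfolding vecs_over_def by auto
    ultimately show ?thesis by simp
  qed
  have "M *\<^sub>v tr j = \<Theta> (tr j)" for j
  proof (induction j)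
    case 0
    have "tr 0 = 0\<^sub>v n" unfolding tr_def by auto
    moreover have "M *\<^sub>v 0\<^sub>v n = 0\<^sub>v n" using Mc by (intro eq_vecI) (auto simp: scalar_prod_def)
    ultimately show ?case using zero by simp
  next
    case (Suc j)
    show ?case
    proof (cases "j < n")
      case True
      have e: "tr (Suc j) = tr j + w $ j \<cdot>\<^sub>v unit_vec n j"
        unfolding tr_def using True by (intro eq_vecI) (auto simp: less_Suc_eq)
      have wj: "w $ j \<in> K" using w True unfolding vecs_over_def by auto
      have "M *\<^sub>v tr (Suc j) = M *\<^sub>v tr j + w $ j \<cdot>\<^sub>v (M *\<^sub>v unit_vec n j)"
        unfolding e using Mc trV[of j] unfolding vecs_over_def
        by (simp add: mult_add_distrib_mat_vec mult_mat_vec)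
      also have "\<dots> = \<Theta> (tr j) + \<Theta> (w $ j \<cdot>\<^sub>v unit_vec n j)"
        using Suc Mu[OF True] hom[OF wj uv[OF True]] by simp
      also have "\<dots> = \<Theta> (tr (Suc j))"
        unfolding e
      proof (rule add[symmetric, OF trV])
        show "w $ j \<cdot>\<^sub>v unit_vec n j \<in> vecs_over K n"
          using uv[OF True] wj K unfolding vecs_over_def by auto
      qed
      finally show ?thesis .
    next
      case False
      hence "tr (Suc j) = tr j" unfolding tr_def by (intro eq_vecI) auto
      thus ?thesis using Suc by simp
    qed
  qed
  moreover have "tr n = w" using w unfolding tr_def vecs_over_def by (intro eq_vecI) auto
  ultimately show ?thesis unfolding M_def by metis
qed

lemma colmat_carrier[simp]: "colmat m y \<in> carrier_mat m m"
  unfolding colmat_def by simp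

lemma colmat_dims[simp]: "dim_row (colmat m y) = m" "dim_col (colmat m y) = m"
  unfolding colmat_def by simp_all

lemma colmat_mult:
  assumes "x \<in> carrier_mat m m" "y \<in> carrier_vec m"
  shows "x * colmat m y = colmat m (x *\<^sub>v y)"
proof (rule eq_matI)
  fix i j assume ij: "i < dim_row (colmat m (x *\<^sub>v y))" "j < dim_col (colmat m (x *\<^sub>v y))"
  hence ij': "i < m" "j < m" by (auto simp: colmat_def)
  have "(x * colmat m y) $$ (i, j) = (\<Sum>k<m. x $$ (i, k) * colmat m y $$ (k, j))"
    using assms ij' by (simp add: scalar_prod_def atLeast0LessThan)
  also have "\<dots> = (if j = 0 then (\<Sum>k<m. x $$ (i, k) * y $ k) else 0)"
    using ij' by (auto simp: colmat_def)
  also have "\<dots> = colmat m (x *\<^sub>v y) $$ (i, j)"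
    using assms ij' by (simp add: colmat_def scalar_prod_def atLeast0LessThan row_def)
  finally show "(x * colmat m y) $$ (i, j) = colmat m (x *\<^sub>v y) $$ (i, j)" .
qed (use assms in \<open>auto simp: colmat_def\<close>)

lemma colmat_add: "(y::'a::comm_ring_1 vec) \<in> carrier_vec m \<Longrightarrow> z \<in> carrier_vec m \<Longrightarrow> colmat m (y + z) = colmat m y + colmat m z"
  unfolding colmat_def by (rule eq_matI) auto

lemma colmat_smult: "y \<in> carrier_vec m \<Longrightarrow> colmat m (c \<cdot>\<^sub>v y) = (c::'a::ring) \<cdot>\<^sub>m colmat m y"
  unfolding colmat_def by (rule eq_matI) auto

lemma colmat_over: "subfield E \<Longrightarrow> y \<in> vecs_over E m \<Longrightarrow> colmat m y \<in> mats_over E m m"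
  unfolding colmat_def mats_over_def vecs_over_def using subfieldD(1) by auto

lemma mats_over_carrier: "A \<in> mats_over K r c \<Longrightarrow> A \<in> carrier_mat r c"
  unfolding mats_over_def by auto

lemma vecs_over_carrier: "v \<in> vecs_over K n \<Longrightarrow> v \<in> carrier_vec n"
  unfolding vecs_over_def by auto

lemma mats_over_mult_vec:
  assumes K: "0 \<in> K" "\<And>x y. x \<in> K \<Longrightarrow> y \<in> K \<Longrightarrow> x + y \<in> K"
    "\<And>x y. x \<in> K \<Longrightarrow> y \<in> K \<Longrightarrow> x * y \<in> K"
    and A: "A \<in> mats_over K r n" and v: "v \<in> vecs_over K n"
  shows "A *\<^sub>v v \<in> vecs_over K r"
proof -
  have sumK: "sum f S \<in> K" if "\<And>i. i \<in> S \<Longrightarrow> f i \<in> K" for f :: "nat \<Rightarrow> _" and S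
    using that by (induction S rule: infinite_finite_induct) (auto simp: K)
  show ?thesis using A v unfolding mats_over_def vecs_over_def
    by (auto simp: scalar_prod_def intro!: sumK K(3))
qed

lemma mats_over_mult:
  assumes K: "0 \<in> K" "\<And>x y. x \<in> K \<Longrightarrow> y \<in> K \<Longrightarrow> x + y \<in> K"
    "\<And>x y. x \<in> K \<Longrightarrow> y \<in> K \<Longrightarrow> x * y \<in> K"
    and A: "A \<in> mats_over K r n" and B: "B \<in> mats_over K n c"
  shows "A * B \<in> mats_over K r c"
proof -
  have sumK: "sum f S \<in> K" if "\<And>i. i \<in> S \<Longrightarrow> f i \<in> K" for f :: "nat \<Rightarrow> _" and S
    using that by (induction S rule: infinite_finite_induct) (auto simp: K)
  show ?thesis using A B unfolding mats_over_def
    by (auto simp: scalar_prod_def intro!: sumK K(3))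
qed

lemma mat_add_cancel_right:
  fixes A B C :: "'a::ab_group_add mat"
  assumes "A \<in> carrier_mat r c" "B \<in> carrier_mat r c" "C \<in> carrier_mat r c" "A + B = C"
  shows "A = C - B"
proof (rule eq_matI)
  fix i j assume "i < dim_row (C - B)" "j < dim_col (C - B)"
  hence ij: "i < r" "j < c" using assms by auto
  have "(A + B) $$ (i, j) = C $$ (i, j)" using assms(4) by simp
  thus "A $$ (i, j) = (C - B) $$ (i, j)" using ij assms by (auto simp: algebra_simps)
qed (use assms in auto)

lemma vec_add_cancel_right:
  fixes a b c :: "'a::ab_group_add vec"
  assumes "a \<in> carrier_vec n" "b \<in> carrier_vec n" "c \<in> carrier_vec n" "a + b = c"
  shows "a = c - b"
proof (rule eq_vecI)
  fix i assume "i < dim_vec (c - b)"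
  hence i: "i < n" using assms by auto
  have "(a + b) $ i = c $ i" using assms(4) by simp
  thus "a $ i = (c - b) $ i" using i assms by (auto simp: algebra_simps)
qed (use assms in auto)

locale emb_setup =
  fixes E :: "'f::{field,finite} set" and m s p :: nat and \<iota> :: "'f mat \<Rightarrow> 'f mat"
  assumes sfE: "subfield E" and emb: "unital_embedding E m s \<iota>" and mpos: "0 < m"
    and cardE: "card E = p ^ s" and cardFp: "card (prime_subfield :: 'f set) = p"
begin

abbreviation "ME \<equiv> mats_over E m m"
abbreviation "V \<equiv> vecs_over (prime_subfield::'f set) (m * s)"
abbreviation "Ec \<equiv> vecs_over E m"

lemma FpE: "prime_subfield \<subseteq> E" using prime_subfield_sub[OF sfE] .

lemma E0: "0 \<in> E" and E1: "1 \<in> E" using subfieldD[OF sfE] by auto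

lemma spos: "0 < s"
proof (rule ccontr)
  assume "\<not> 0 < s"
  hence "card E = 1" using cardE by simp
  thus False using card_subfield_ge2[OF sfE] by simp
qed

lemma ms_pos: "0 < m * s" using mpos spos by simp

lemma iota_over: "x \<in> ME \<Longrightarrow> \<iota> x \<in> mats_over prime_subfield (m * s) (m * s)"
  using emb unfolding unital_embedding_def by auto

lemma iota_carrier: "x \<in> ME \<Longrightarrow> \<iota> x \<in> carrier_mat (m * s) (m * s)"
  using iota_over mats_over_carrier by blast

lemma iota_add: "x \<in> ME \<Longrightarrow> y \<in> ME \<Longrightarrow> \<iota> (x + y) = \<iota> x + \<iota> y"
  and iota_mult: "x \<in> ME \<Longrightarrow> y \<in> ME \<Longrightarrow> \<iota> (x * y) = \<iota> x * \<iota> y"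
  and iota_one: "\<iota> (1\<^sub>m m) = 1\<^sub>m (m * s)"
  and iota_smult: "c \<in> prime_subfield \<Longrightarrow> x \<in> ME \<Longrightarrow> \<iota> (c \<cdot>\<^sub>m x) = c \<cdot>\<^sub>m \<iota> x"
  and iota_inj: "inj_on \<iota> ME"
  using emb unfolding unital_embedding_def by auto

lemma ME_carrier: "x \<in> ME \<Longrightarrow> x \<in> carrier_mat m m" using mats_over_carrier by blast

lemma ME_add: "x \<in> ME \<Longrightarrow> y \<in> ME \<Longrightarrow> x + y \<in> ME"
  unfolding mats_over_def using subfieldD[OF sfE] by auto

lemma ME_minus: "x \<in> ME \<Longrightarrow> y \<in> ME \<Longrightarrow> x - y \<in> ME"
  unfolding mats_over_def using subfield_diff[OF sfE] by auto

lemma ME_mult: "x \<in> ME \<Longrightarrow> y \<in> ME \<Longrightarrow> x * y \<in> ME"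
  by (rule mats_over_mult) (auto simp: subfieldD[OF sfE])

lemma ME_one: "1\<^sub>m m \<in> ME" and ME_zero: "0\<^sub>m m m \<in> ME"
  unfolding mats_over_def using E0 E1 by auto

lemma ME_smult: "c \<in> E \<Longrightarrow> x \<in> ME \<Longrightarrow> c \<cdot>\<^sub>m x \<in> ME"
  unfolding mats_over_def using subfieldD[OF sfE] by auto

lemma ME_scalar: "c \<in> E \<Longrightarrow> c \<cdot>\<^sub>m 1\<^sub>m m \<in> ME"
  using ME_smult ME_one by blast

lemma Ec_mult: "x \<in> ME \<Longrightarrow> y \<in> Ec \<Longrightarrow> x *\<^sub>v y \<in> Ec"
  by (rule mats_over_mult_vec) (auto simp: subfieldD[OF sfE])

lemma V_mult: "A \<in> mats_over prime_subfield (m * s) (m * s) \<Longrightarrow> w \<in> V \<Longrightarrow> A *\<^sub>v w \<in> V"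
  by (rule mats_over_mult_vec) (auto simp: prime_subfield_0 prime_subfield_add prime_subfield_mult)

lemma Fp_mats_mult: "A \<in> mats_over prime_subfield (m * s) (m * s) \<Longrightarrow> B \<in> mats_over prime_subfield (m * s) (m * s)
   \<Longrightarrow> A * B \<in> mats_over prime_subfield (m * s) (m * s)"
  by (rule mats_over_mult) (auto simp: prime_subfield_0 prime_subfield_add prime_subfield_mult)

lemma unit_V: "k < m * s \<Longrightarrow> unit_vec (m * s) k \<in> V"
  by (rule unit_vec_in_vecs_over) (auto simp: prime_subfield_0 prime_subfield_1)

lemma iota_zero: "\<iota> (0\<^sub>m m m) = 0\<^sub>m (m * s) (m * s)"
proof -
  have "\<iota> (0\<^sub>m m m) + \<iota> (0\<^sub>m m m) = \<iota> (0\<^sub>m m m)"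
    using iota_add[OF ME_zero ME_zero] by simp
  hence "\<iota> (0\<^sub>m m m) = \<iota> (0\<^sub>m m m) - \<iota> (0\<^sub>m m m)"
    using mat_add_cancel_right iota_carrier[OF ME_zero] by blast
  thus ?thesis using iota_carrier[OF ME_zero] by (auto intro!: eq_matI)
qed

lemma iota_diff: "x \<in> ME \<Longrightarrow> y \<in> ME \<Longrightarrow> \<iota> (x - y) = \<iota> x - \<iota> y"
proof -
  assume xy: "x \<in> ME" "y \<in> ME"
  have "(x - y) + y = x" using ME_carrier[OF xy(1)] ME_carrier[OF xy(2)]
    by (intro eq_matI) auto
  hence "\<iota> (x - y) + \<iota> y = \<iota> x" using iota_add[OF ME_minus[OF xy] xy(2)] by simp
  thus ?thesis using mat_add_cancel_right iota_carrier ME_minus xy by blast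
qed

definition e11 :: "'f mat" where "e11 = colmat m (unit_vec m 0)"

lemma e0_Ec: "unit_vec m 0 \<in> Ec" by (rule unit_vec_in_vecs_over) (use E0 E1 mpos in auto)

lemma e11_ME: "e11 \<in> ME" unfolding e11_def using colmat_over[OF sfE e0_Ec] .

lemma e11_vec: "e11 *\<^sub>v unit_vec m 0 = unit_vec m 0"
  unfolding e11_def colmat_def using mpos by (intro eq_vecI) (auto simp: row_def)

lemma e11_idem: "e11 * e11 = e11"
proof -
  have "e11 * e11 = colmat m (e11 *\<^sub>v unit_vec m 0)"
    unfolding e11_def by (rule colmat_mult) simp_all
  thus ?thesis using e11_vec e11_def by simp
qed

lemma exists_v0: "\<exists>v. v \<in> V \<and> v \<noteq> 0\<^sub>v (m * s) \<and> \<iota> e11 *\<^sub>v v = v"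
proof -
  have "e11 \<noteq> 0\<^sub>m m m"
  proof
    assume "e11 = 0\<^sub>m m m"
    hence "e11 $$ (0, 0) = 0" using mpos by simp
    thus False unfolding e11_def colmat_def using mpos by simp
  qed
  hence ne: "\<iota> e11 \<noteq> 0\<^sub>m (m * s) (m * s)"
    using iota_inj e11_ME ME_zero iota_zero unfolding inj_on_def by metis
  have "\<exists>k < m * s. \<iota> e11 *\<^sub>v unit_vec (m * s) k \<noteq> 0\<^sub>v (m * s)"
  proof (rule ccontr)
    assume nz: "\<not> ?thesis"
    have "\<iota> e11 = 0\<^sub>m (m * s) (m * s)"
    proof (rule eq_matI)
      fix i k assume ik: "i < dim_row (0\<^sub>m (m * s) (m * s) :: 'f mat)" "k < dim_col (0\<^sub>m (m * s) (m * s) :: 'f mat)"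
      hence ik': "i < m * s" "k < m * s" by auto
      have "\<iota> e11 $$ (i, k) = (\<iota> e11 *\<^sub>v unit_vec (m * s) k) $ i"
        using mat_vec_unit[OF iota_carrier[OF e11_ME] ik'(2) ik'(1)] by simp
      also have "\<dots> = 0" using nz ik' by auto
      finally show "\<iota> e11 $$ (i, k) = 0\<^sub>m (m * s) (m * s) $$ (i, k)" using ik' by simp
    qed (use iota_carrier[OF e11_ME] in auto)
    thus False using ne by simp
  qed
  then obtain k where k: "k < m * s" "\<iota> e11 *\<^sub>v unit_vec (m * s) k \<noteq> 0\<^sub>v (m * s)" by blast
  let ?v = "\<iota> e11 *\<^sub>v unit_vec (m * s) k"
  have "?v \<in> V" using V_mult[OF iota_over[OF e11_ME] unit_V[OF k(1)]] .
  moreover have "\<iota> e11 *\<^sub>v ?v = ?v"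
  proof -
    have "\<iota> e11 *\<^sub>v ?v = (\<iota> e11 * \<iota> e11) *\<^sub>v unit_vec (m * s) k"
      using iota_carrier[OF e11_ME] by simp
    thus ?thesis using iota_mult[OF e11_ME e11_ME] e11_idem by simp
  qed
  ultimately show ?thesis using k by blast
qed

definition v0 :: "'f vec" where "v0 = (SOME v. v \<in> V \<and> v \<noteq> 0\<^sub>v (m * s) \<and> \<iota> e11 *\<^sub>v v = v)"

lemma v0: "v0 \<in> V" "v0 \<noteq> 0\<^sub>v (m * s)" "\<iota> e11 *\<^sub>v v0 = v0"
  using someI_ex[OF exists_v0] unfolding v0_def by auto

lemma v0_carrier: "v0 \<in> carrier_vec (m * s)" using v0(1) vecs_over_carrier by blast

definition psi :: "'f vec \<Rightarrow> 'f vec" where "psi y = \<iota> (colmat m y) *\<^sub>v v0"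

lemma psi_V: "y \<in> Ec \<Longrightarrow> psi y \<in> V"
  unfolding psi_def using V_mult iota_over colmat_over[OF sfE] v0(1) by blast

lemma psi_carrier: "y \<in> Ec \<Longrightarrow> psi y \<in> carrier_vec (m * s)"
  using psi_V vecs_over_carrier by blast

lemma psi_mult: "x \<in> ME \<Longrightarrow> y \<in> Ec \<Longrightarrow> \<iota> x *\<^sub>v psi y = psi (x *\<^sub>v y)"
proof -
  assume x: "x \<in> ME" and y: "y \<in> Ec"
  have c: "colmat m y \<in> ME" using colmat_over[OF sfE y] .
  have "\<iota> x *\<^sub>v psi y = (\<iota> x * \<iota> (colmat m y)) *\<^sub>v v0"
    unfolding psi_def using iota_carrier[OF x] iota_carrier[OF c] v0_carrier by simp
  also have "\<dots> = \<iota> (x * colmat m y) *\<^sub>v v0" using iota_mult[OF x c] by simp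
  also have "x * colmat m y = colmat m (x *\<^sub>v y)"
    using colmat_mult ME_carrier[OF x] vecs_over_carrier[OF y] by blast
  finally show ?thesis unfolding psi_def .
qed

lemma psi_add: "y \<in> Ec \<Longrightarrow> z \<in> Ec \<Longrightarrow> psi (y + z) = psi y + psi z"
proof -
  assume y: "y \<in> Ec" and z: "z \<in> Ec"
  have "colmat m (y + z) = colmat m y + colmat m z"
    using colmat_add vecs_over_carrier y z by blast
  thus ?thesis unfolding psi_def
    using iota_add[OF colmat_over[OF sfE y] colmat_over[OF sfE z]]
      iota_carrier[OF colmat_over[OF sfE y]] iota_carrier[OF colmat_over[OF sfE z]] v0_carrier
    by (simp add: add_mult_distrib_mat_vec)
qed

lemma Ec_add: "y \<in> Ec \<Longrightarrow> z \<in> Ec \<Longrightarrow> y + z \<in> Ec"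
  unfolding vecs_over_def using subfieldD[OF sfE] by auto

lemma Ec_minus: "y \<in> Ec \<Longrightarrow> z \<in> Ec \<Longrightarrow> y - z \<in> Ec"
  unfolding vecs_over_def using subfield_diff[OF sfE] by auto

lemma Ec_smult: "c \<in> E \<Longrightarrow> y \<in> Ec \<Longrightarrow> c \<cdot>\<^sub>v y \<in> Ec"
  unfolding vecs_over_def using subfieldD[OF sfE] by auto

lemma psi_diff: "y \<in> Ec \<Longrightarrow> z \<in> Ec \<Longrightarrow> psi (y - z) = psi y - psi z"
proof -
  assume y: "y \<in> Ec" and z: "z \<in> Ec"
  have "(y - z) + z = y" using vecs_over_carrier[OF y] vecs_over_carrier[OF z] by (intro eq_vecI) auto
  hence "psi (y - z) + psi z = psi y" using psi_add[OF Ec_minus[OF y z] z] by simp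
  thus ?thesis using vec_add_cancel_right psi_carrier Ec_minus y z by blast
qed

lemma psi_smult: "c \<in> prime_subfield \<Longrightarrow> y \<in> Ec \<Longrightarrow> psi (c \<cdot>\<^sub>v y) = c \<cdot>\<^sub>v psi y"
proof -
  assume c: "c \<in> prime_subfield" and y: "y \<in> Ec"
  have "colmat m (c \<cdot>\<^sub>v y) = c \<cdot>\<^sub>m colmat m y" using colmat_smult vecs_over_carrier y by blast
  thus ?thesis unfolding psi_def using iota_smult[OF c colmat_over[OF sfE y]]
      iota_carrier[OF colmat_over[OF sfE y]] v0_carrier
    by (auto intro!: eq_vecI simp: scalar_prod_def sum_distrib_left mult.assoc)
qed

lemma psi_zero_imp: "y \<in> Ec \<Longrightarrow> psi y = 0\<^sub>v (m * s) \<Longrightarrow> y = 0\<^sub>v m"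
proof (rule ccontr)
  assume y: "y \<in> Ec" and p0: "psi y = 0\<^sub>v (m * s)" and ne: "y \<noteq> 0\<^sub>v m"
  have "\<exists>i<m. y $ i \<noteq> 0"
  proof (rule ccontr)
    assume "\<not> ?thesis"
    hence "y = 0\<^sub>v m" using vecs_over_carrier[OF y] by (intro eq_vecI) auto
    thus False using ne by simp
  qed
  then obtain i where i: "i < m" "y $ i \<noteq> 0" by blast
  define R where "R = mat m m (\<lambda>(a,b). if a = 0 \<and> b = i then inverse (y $ i) else (0::'f))"
  have R: "R \<in> ME" unfolding R_def mats_over_def using y i subfieldD[OF sfE] unfolding vecs_over_def by auto
  have Ry: "R *\<^sub>v y = unit_vec m 0"
  proof (rule eq_vecI)
    fix a assume "a < dim_vec (unit_vec m 0::'f vec)"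
    hence a: "a < m" by simp
    have "(R *\<^sub>v y) $ a = (\<Sum>b<m. R $$ (a, b) * y $ b)"
      using a vecs_over_carrier[OF y] unfolding R_def by (simp add: scalar_prod_def row_def atLeast0LessThan)
    also have "\<dots> = (\<Sum>b\<in>{i}. R $$ (a, b) * y $ b)"
      by (rule sum.mono_neutral_right) (use i a in \<open>auto simp: R_def\<close>)
    also have "\<dots> = unit_vec m 0 $ a" using a i mpos unfolding R_def by auto
    finally show "(R *\<^sub>v y) $ a = unit_vec m 0 $ a" .
  qed (simp add: R_def)
  have "\<iota> R *\<^sub>v psi y = psi (unit_vec m 0)" using psi_mult[OF R y] Ry by simp
  also have "psi (unit_vec m 0) = v0" unfolding psi_def e11_def[symmetric] using v0 by simp
  finally have "v0 = \<iota> R *\<^sub>v 0\<^sub>v (m * s)" using p0 by simp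
  also have "\<dots> = 0\<^sub>v (m * s)" using iota_carrier[OF R] by (intro eq_vecI) (auto simp: scalar_prod_def)
  finally show False using v0(2) by simp
qed

lemma psi_inj: "inj_on psi Ec"
proof
  fix y z assume y: "y \<in> Ec" and z: "z \<in> Ec" and e: "psi y = psi z"
  have "psi (y - z) = 0\<^sub>v (m * s)" using psi_diff[OF y z] e psi_carrier[OF z] by auto
  hence "y - z = 0\<^sub>v m" using psi_zero_imp Ec_minus[OF y z] by blast
  show "y = z"
  proof (rule eq_vecI)
    fix i assume i: "i < dim_vec z"
    hence "(y - z) $ i = 0" using \<open>y - z = 0\<^sub>v m\<close> vecs_over_carrier[OF z] by simp
    thus "y $ i = z $ i" using i vecs_over_carrier[OF y] vecs_over_carrier[OF z] by simp
  qed (use vecs_over_carrier[OF y] vecs_over_carrier[OF z] in auto)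
qed

lemma psi_onto: "psi ` Ec = V"
proof -
  have sub: "psi ` Ec \<subseteq> V" using psi_V by blast
  have "card (psi ` Ec) = card Ec" using card_image[OF psi_inj] .
  also have "\<dots> = p ^ (m * s)" using card_vecs_over[of E m] cardE by (simp add: power_mult[symmetric] mult.commute)
  also have "\<dots> = card V" using card_vecs_over[of "prime_subfield :: 'f set" "m * s"] cardFp by simp
  finally have cc: "card (psi ` Ec) = card V" .
  have "card (prime_subfield :: 'f set) > 0" using prime_subfield_0 by (auto simp: card_gt_0_iff)
  hence "card V > 0" using card_vecs_over[of "prime_subfield :: 'f set" "m * s"] by simp
  hence "finite V" using card_gt_0_iff by blast
  thus ?thesis using sub cc by (intro card_subset_eq) simp_all
qed

definition psiinv :: "'f vec \<Rightarrow> 'f vec" where "psiinv = the_inv_into Ec psi"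

lemma psiinv: "w \<in> V \<Longrightarrow> psiinv w \<in> Ec \<and> psi (psiinv w) = w"
  unfolding psiinv_def using the_inv_into_into[OF psi_inj, of w Ec] f_the_inv_into_f[OF psi_inj, of w] psi_onto
  by auto

lemma psiinv_psi: "y \<in> Ec \<Longrightarrow> psiinv (psi y) = y"
  unfolding psiinv_def using psi_inj by (rule the_inv_into_f_f)

lemma mat_eq_on_psi:
  assumes "A \<in> carrier_mat (m * s) (m * s)" "B \<in> carrier_mat (m * s) (m * s)"
    "\<And>y. y \<in> Ec \<Longrightarrow> A *\<^sub>v psi y = B *\<^sub>v psi y"
  shows "A = B"
  by (rule mat_eq_on_vecs[OF assms(1,2) prime_subfield_0 prime_subfield_1])
     (metis assms(3) psi_onto imageE)

end


lemma (in emb_setup) psiinv_add: "a \<in> V \<Longrightarrow> b \<in> V \<Longrightarrow> psiinv (a + b) = psiinv a + psiinv b"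
proof -
  assume a: "a \<in> V" and b: "b \<in> V"
  have "psi (psiinv a + psiinv b) = a + b" using psi_add psiinv a b by metis
  hence "psiinv (a + b) = psiinv (psi (psiinv a + psiinv b))" by simp
  also have "\<dots> = psiinv a + psiinv b" using psiinv_psi Ec_add psiinv a b by metis
  finally show ?thesis .
qed

lemma (in emb_setup) psiinv_smult: "c \<in> prime_subfield \<Longrightarrow> a \<in> V \<Longrightarrow> psiinv (c \<cdot>\<^sub>v a) = c \<cdot>\<^sub>v psiinv a"
proof -
  assume c: "c \<in> prime_subfield" and a: "a \<in> V"
  have cE: "c \<in> E" using c FpE by blast
  have "psi (c \<cdot>\<^sub>v psiinv a) = c \<cdot>\<^sub>v a" using psi_smult[OF c] psiinv a by metis
  hence "psiinv (c \<cdot>\<^sub>v a) = psiinv (psi (c \<cdot>\<^sub>v psiinv a))" by simp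
  also have "\<dots> = c \<cdot>\<^sub>v psiinv a" using psiinv_psi Ec_smult[OF cE] psiinv a by metis
  finally show ?thesis .
qed

locale two_emb = A: emb_setup E m s p \<iota> + B: emb_setup E m s p \<iota>'
  for E :: "'f::{field,finite} set" and m s p \<iota> \<iota>'
begin

lemma transport_psi:
  assumes Q: "Q \<in> mats_over E m m"
  shows "\<exists>U. U \<in> mats_over prime_subfield (m * s) (m * s) \<and> (\<forall>y\<in>A.Ec. U *\<^sub>v A.psi y = B.psi (Q *\<^sub>v y))"
proof -
  define \<Theta> where "\<Theta> = (\<lambda>w. B.psi (Q *\<^sub>v A.psiinv w))"
  have into: "\<Theta> w \<in> A.V" if "w \<in> A.V" for w
    unfolding \<Theta>_def using B.psi_V A.Ec_mult[OF Q] A.psiinv[OF that] by blast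
  have add: "\<Theta> (a + b) = \<Theta> a + \<Theta> b" if "a \<in> A.V" "b \<in> A.V" for a b
  proof -
    have "Q *\<^sub>v A.psiinv (a + b) = Q *\<^sub>v A.psiinv a + Q *\<^sub>v A.psiinv b"
      using A.psiinv_add[OF that] A.psiinv[OF that(1)] A.psiinv[OF that(2)] A.ME_carrier[OF Q]
        vecs_over_carrier by (metis mult_add_distrib_mat_vec)
    thus ?thesis unfolding \<Theta>_def
      using B.psi_add A.Ec_mult[OF Q] A.psiinv[OF that(1)] A.psiinv[OF that(2)] by metis
  qed
  have hom: "\<Theta> (c \<cdot>\<^sub>v a) = c \<cdot>\<^sub>v \<Theta> a" if "c \<in> prime_subfield" "a \<in> A.V" for c a
  proof -
    have "Q *\<^sub>v A.psiinv (c \<cdot>\<^sub>v a) = c \<cdot>\<^sub>v (Q *\<^sub>v A.psiinv a)"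
      using A.psiinv_smult[OF that] A.psiinv[OF that(2)] A.ME_carrier[OF Q]
        vecs_over_carrier by (metis mult_mat_vec)
    thus ?thesis unfolding \<Theta>_def
      using B.psi_smult[OF that(1)] A.Ec_mult[OF Q] A.psiinv[OF that(2)] by metis
  qed
  define U where "U = mat (m * s) (m * s) (\<lambda>(i,k). \<Theta> (unit_vec (m * s) k) $ i)"
  have Uw: "U *\<^sub>v w = \<Theta> w" if "w \<in> A.V" for w
    unfolding U_def
    by (rule linear_map_matrix[OF prime_subfield_0 prime_subfield_1 prime_subfield_add prime_subfield_mult
          into add hom that])
  have "U \<in> mats_over prime_subfield (m * s) (m * s)"
    unfolding U_def mats_over_def using into A.unit_V unfolding vecs_over_def by auto
  moreover have "\<forall>y\<in>A.Ec. U *\<^sub>v A.psi y = B.psi (Q *\<^sub>v y)"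
    using Uw A.psi_V A.psiinv_psi unfolding \<Theta>_def by simp
  ultimately show ?thesis by blast
qed

lemma transport_intertw:
  assumes Q: "Q \<in> mats_over E m m" "Qi \<in> mats_over E m m" "Qi * Q = 1\<^sub>m m"
    and U: "U \<in> mats_over prime_subfield (m * s) (m * s)" "\<forall>y\<in>A.Ec. U *\<^sub>v A.psi y = B.psi (Q *\<^sub>v y)"
    and x: "x \<in> mats_over E m m"
  shows "U * \<iota> x = \<iota>' (Q * x * Qi) * U"
proof (rule A.mat_eq_on_psi)
  have Uc: "U \<in> carrier_mat (m * s) (m * s)" using U(1) mats_over_carrier by blast
  have QxQi: "Q * x * Qi \<in> mats_over E m m" using A.ME_mult Q x by blast
  show "U * \<iota> x \<in> carrier_mat (m * s) (m * s)" using Uc A.iota_carrier[OF x] by simp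
  show "\<iota>' (Q * x * Qi) * U \<in> carrier_mat (m * s) (m * s)" using Uc B.iota_carrier[OF QxQi] by simp
  fix y assume y: "y \<in> A.Ec"
  have yc: "y \<in> carrier_vec m" using vecs_over_carrier[OF y] .
  have c: "Q \<in> carrier_mat m m" "Qi \<in> carrier_mat m m" "x \<in> carrier_mat m m"
    using Q x A.ME_carrier by auto
  have "(U * \<iota> x) *\<^sub>v A.psi y = U *\<^sub>v (\<iota> x *\<^sub>v A.psi y)"
    using Uc A.iota_carrier[OF x] A.psi_carrier[OF y] by simp
  also have "\<dots> = B.psi (Q *\<^sub>v (x *\<^sub>v y))" using A.psi_mult[OF x y] U(2) A.Ec_mult[OF x y] by simp
  finally have l: "(U * \<iota> x) *\<^sub>v A.psi y = B.psi (Q *\<^sub>v (x *\<^sub>v y))" .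
  have "(\<iota>' (Q * x * Qi) * U) *\<^sub>v A.psi y = \<iota>' (Q * x * Qi) *\<^sub>v B.psi (Q *\<^sub>v y)"
    using Uc B.iota_carrier[OF QxQi] A.psi_carrier[OF y] U(2) y by simp
  also have "\<dots> = B.psi ((Q * x * Qi) *\<^sub>v (Q *\<^sub>v y))" using B.psi_mult[OF QxQi] A.Ec_mult[OF Q(1) y] by simp
  also have "(Q * x * Qi) *\<^sub>v (Q *\<^sub>v y) = Q *\<^sub>v (x *\<^sub>v y)"
  proof -
    have "(Q * x * Qi) *\<^sub>v (Q *\<^sub>v y) = ((Q * x * Qi) * Q) *\<^sub>v y"
      by (rule assoc_mult_mat_vec[symmetric]) (use c yc in auto)
    also have "(Q * x * Qi) * Q = (Q * x) * (Qi * Q)"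
      by (rule assoc_mult_mat[of "Q * x" m m Qi m Q m]) (use c in auto)
    also have "\<dots> = Q * x" using Q(3) c by simp
    also have "(Q * x) *\<^sub>v y = Q *\<^sub>v (x *\<^sub>v y)" using c yc by simp
    finally show ?thesis .
  qed
  finally show "(U * \<iota> x) *\<^sub>v A.psi y = (\<iota>' (Q * x * Qi) * U) *\<^sub>v A.psi y" using l by simp
qed

end


lemma scalar_mat_vec: "(y::'a::field vec) \<in> carrier_vec m \<Longrightarrow> (c \<cdot>\<^sub>m 1\<^sub>m m) *\<^sub>v y = c \<cdot>\<^sub>v y"
proof (rule eq_vecI)
  assume y: "y \<in> carrier_vec m"
  fix i assume "i < dim_vec (c \<cdot>\<^sub>v y)"
  hence i: "i < m" using y by simp
  have "((c \<cdot>\<^sub>m 1\<^sub>m m) *\<^sub>v y) $ i = (\<Sum>j\<in>{0..<m}. c * (if i = j then 1 else 0) * y $ j)"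
    using i y by (simp add: scalar_prod_def row_def)
  also have "\<dots> = (\<Sum>j\<in>{i}. c * (if i = j then 1 else 0) * y $ j)"
    by (rule sum.mono_neutral_right) (use i in auto)
  finally show "((c \<cdot>\<^sub>m 1\<^sub>m m) *\<^sub>v y) $ i = (c \<cdot>\<^sub>v y) $ i" using i y by simp
qed auto

lemma (in emb_setup) psi_scalar: "c \<in> E \<Longrightarrow> y \<in> Ec \<Longrightarrow> psi (c \<cdot>\<^sub>v y) = \<iota> (c \<cdot>\<^sub>m 1\<^sub>m m) *\<^sub>v psi y"
  using psi_mult[OF ME_scalar] scalar_mat_vec vecs_over_carrier by metis

lemma (in emb_setup) centralizer:
  assumes W: "W \<in> carrier_mat (m * s) (m * s)" "\<forall>w\<in>V. W *\<^sub>v w \<in> V"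
    and WE: "\<forall>c\<in>E. W * \<iota> (c \<cdot>\<^sub>m 1\<^sub>m m) = \<iota> (c \<cdot>\<^sub>m 1\<^sub>m m) * W"
    and XN: "\<forall>n\<in>N. X n \<in> ME" "\<forall>n\<in>N. W * \<iota> (X n) = \<iota> (X n) * W"
    and split: "\<forall>M\<in>carrier_mat m m. (\<forall>n\<in>N. M * X n = X n * M) \<longrightarrow> (\<exists>c. M = c \<cdot>\<^sub>m 1\<^sub>m m)"
  shows "\<exists>c\<in>E. W = \<iota> (c \<cdot>\<^sub>m 1\<^sub>m m)"
proof -
  define \<Omega> where "\<Omega> = (\<lambda>y. psiinv (W *\<^sub>v psi y))"
  have O: "\<Omega> y \<in> Ec" "psi (\<Omega> y) = W *\<^sub>v psi y" if "y \<in> Ec" for y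
    unfolding \<Omega>_def using psiinv W(2) psi_V that by auto
  have pinj: "a = b" if "a \<in> Ec" "b \<in> Ec" "psi a = psi b" for a b
    using inj_onD[OF psi_inj] that by blast
  have Wm: "W *\<^sub>v (A *\<^sub>v psi y) = A *\<^sub>v (W *\<^sub>v psi y)"
    if "A \<in> carrier_mat (m * s) (m * s)" "W * A = A * W" "y \<in> Ec" for A y
  proof -
    have "W *\<^sub>v (A *\<^sub>v psi y) = (W * A) *\<^sub>v psi y"
      by (rule assoc_mult_mat_vec[OF W(1) that(1) psi_carrier[OF that(3)], symmetric])
    also have "\<dots> = (A * W) *\<^sub>v psi y" using that(2) by simp
    also have "\<dots> = A *\<^sub>v (W *\<^sub>v psi y)"
      by (rule assoc_mult_mat_vec[OF that(1) W(1) psi_carrier[OF that(3)]])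
    finally show ?thesis .
  qed
  have add: "\<Omega> (a + b) = \<Omega> a + \<Omega> b" if "a \<in> Ec" "b \<in> Ec" for a b
  proof (rule pinj)
    show "\<Omega> (a + b) \<in> Ec" using O Ec_add that by blast
    show "\<Omega> a + \<Omega> b \<in> Ec" using O Ec_add that by blast
    have "psi (\<Omega> (a + b)) = W *\<^sub>v (psi a + psi b)" using O(2) Ec_add psi_add that by metis
    also have "\<dots> = W *\<^sub>v psi a + W *\<^sub>v psi b" using W(1) psi_carrier that by (simp add: mult_add_distrib_mat_vec)
    also have "\<dots> = psi (\<Omega> a + \<Omega> b)" using O psi_add that by metis
    finally show "psi (\<Omega> (a + b)) = psi (\<Omega> a + \<Omega> b)" .
  qed
  have hom: "\<Omega> (c \<cdot>\<^sub>v a) = c \<cdot>\<^sub>v \<Omega> a" if "c \<in> E" "a \<in> Ec" for c a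
  proof (rule pinj)
    show "\<Omega> (c \<cdot>\<^sub>v a) \<in> Ec" using O Ec_smult that by blast
    show "c \<cdot>\<^sub>v \<Omega> a \<in> Ec" using O Ec_smult that by blast
    have "psi (\<Omega> (c \<cdot>\<^sub>v a)) = W *\<^sub>v (\<iota> (c \<cdot>\<^sub>m 1\<^sub>m m) *\<^sub>v psi a)"
      using O(2) Ec_smult psi_scalar that by metis
    also have "\<dots> = \<iota> (c \<cdot>\<^sub>m 1\<^sub>m m) *\<^sub>v (W *\<^sub>v psi a)"
      using Wm iota_carrier ME_scalar WE that by blast
    also have "\<dots> = psi (c \<cdot>\<^sub>v \<Omega> a)" using O psi_scalar that by metis
    finally show "psi (\<Omega> (c \<cdot>\<^sub>v a)) = psi (c \<cdot>\<^sub>v \<Omega> a)" .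
  qed
  define M where "M = mat m m (\<lambda>(i,k). \<Omega> (unit_vec m k) $ i)"
  have My: "M *\<^sub>v y = \<Omega> y" if "y \<in> Ec" for y
    unfolding M_def
    by (rule linear_map_matrix[OF E0 E1 subfieldD(3)[OF sfE] subfieldD(4)[OF sfE]])
       (use O add hom that in auto)
  have Mc: "M \<in> carrier_mat m m" unfolding M_def by simp
  have comm: "M * X n = X n * M" if n: "n \<in> N" for n
  proof (rule mat_eq_on_vecs[OF _ _ E0 E1])
    have Xc: "X n \<in> carrier_mat m m" using XN(1) n ME_carrier by blast
    show "M * X n \<in> carrier_mat m m" "X n * M \<in> carrier_mat m m" using Mc Xc by auto
    fix y assume y: "y \<in> Ec"
    have yc: "y \<in> carrier_vec m" using vecs_over_carrier[OF y] .
    have Xy: "X n *\<^sub>v y \<in> Ec" using Ec_mult XN(1) n y by blast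
    have "(M * X n) *\<^sub>v y = \<Omega> (X n *\<^sub>v y)" using Mc Xc yc My[OF Xy] by simp
    also have "\<dots> = X n *\<^sub>v \<Omega> y"
    proof (rule pinj)
      show "\<Omega> (X n *\<^sub>v y) \<in> Ec" using O Xy by blast
      show "X n *\<^sub>v \<Omega> y \<in> Ec" using O y Ec_mult XN(1) n by blast
      have "psi (\<Omega> (X n *\<^sub>v y)) = W *\<^sub>v (\<iota> (X n) *\<^sub>v psi y)"
        using O(2)[OF Xy] psi_mult XN(1) n y by metis
      also have "\<dots> = \<iota> (X n) *\<^sub>v (W *\<^sub>v psi y)"
        using Wm iota_carrier XN n y by blast
      also have "\<dots> = psi (X n *\<^sub>v \<Omega> y)" using O psi_mult XN(1) n y by metis
      finally show "psi (\<Omega> (X n *\<^sub>v y)) = psi (X n *\<^sub>v \<Omega> y)" .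
    qed
    also have "\<dots> = (X n * M) *\<^sub>v y" using Mc Xc yc My[OF y] by simp
    finally show "(M * X n) *\<^sub>v y = (X n * M) *\<^sub>v y" .
  qed
  obtain c where c: "M = c \<cdot>\<^sub>m 1\<^sub>m m" using split Mc comm by blast
  have "c = M $$ (0, 0)" using c mpos by simp
  also have "\<dots> = \<Omega> (unit_vec m 0) $ 0" unfolding M_def using mpos by simp
  finally have cE: "c \<in> E" using O(1)[OF e0_Ec] mpos unfolding vecs_over_def by auto
  have "W = \<iota> (c \<cdot>\<^sub>m 1\<^sub>m m)"
  proof (rule mat_eq_on_psi[OF W(1) iota_carrier[OF ME_scalar[OF cE]]])
    fix y assume y: "y \<in> Ec"
    have "W *\<^sub>v psi y = psi (M *\<^sub>v y)" using O(2) My y by simp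
    also have "M *\<^sub>v y = c \<cdot>\<^sub>v y" using c scalar_mat_vec vecs_over_carrier[OF y] by simp
    also have "psi (c \<cdot>\<^sub>v y) = \<iota> (c \<cdot>\<^sub>m 1\<^sub>m m) *\<^sub>v psi y" using psi_scalar cE y by blast
    finally show "W *\<^sub>v psi y = \<iota> (c \<cdot>\<^sub>m 1\<^sub>m m) *\<^sub>v psi y" .
  qed
  thus ?thesis using cE by blast
qed


locale trace_map =
  fixes E :: "'f::field set" and \<tau> :: "'f \<Rightarrow> 'f"
  assumes sfE: "subfield E" and tin: "\<And>z. \<tau> z \<in> E" and tadd: "\<And>a b. \<tau> (a + b) = \<tau> a + \<tau> b"
    and tlin: "\<And>a e. e \<in> E \<Longrightarrow> \<tau> (a * e) = \<tau> a * e"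
begin

lemma t0: "\<tau> 0 = 0"
  using tadd[of 0 0] by (metis add_cancel_right_right add_0)

lemma tsum: "\<tau> (sum f S) = (\<Sum>i\<in>S. \<tau> (f i))"
  by (induction S rule: infinite_finite_induct) (auto simp: t0 tadd)

definition tmap :: "'f mat \<Rightarrow> 'f mat" where "tmap A = map_mat \<tau> A"

lemma tmap_over: "tmap A \<in> mats_over E (dim_row A) (dim_col A)"
  unfolding tmap_def mats_over_def using tin by auto

lemma tmap_carrier: "A \<in> carrier_mat r c \<Longrightarrow> tmap A \<in> carrier_mat r c"
  unfolding tmap_def by simp

lemma tmap_mult_right:
  assumes A: "A \<in> carrier_mat r k" and B: "B \<in> mats_over E k c"
  shows "tmap (A * B) = tmap A * B"
proof (rule eq_matI)
  have Bc: "B \<in> carrier_mat k c" using B mats_over_carrier by blast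
  fix i j assume "i < dim_row (tmap A * B)" "j < dim_col (tmap A * B)"
  hence ij: "i < r" "j < c" using A Bc unfolding tmap_def by auto
  have "tmap (A * B) $$ (i, j) = \<tau> (\<Sum>l\<in>{0..<k}. A $$ (i, l) * B $$ (l, j))"
    unfolding tmap_def using A Bc ij by (simp add: scalar_prod_def)
  also have "\<dots> = (\<Sum>l\<in>{0..<k}. \<tau> (A $$ (i, l)) * B $$ (l, j))"
    unfolding tsum using B ij unfolding mats_over_def by (auto intro!: sum.cong tlin)
  also have "\<dots> = (tmap A * B) $$ (i, j)"
    unfolding tmap_def using A Bc ij by (simp add: scalar_prod_def)
  finally show "tmap (A * B) $$ (i, j) = (tmap A * B) $$ (i, j)" .
qed (use assms mats_over_carrier in \<open>auto simp: tmap_def\<close>)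

lemma tmap_mult_left:
  assumes B: "B \<in> mats_over E r k" and A: "A \<in> carrier_mat k c"
  shows "tmap (B * A) = B * tmap A"
proof (rule eq_matI)
  have Bc: "B \<in> carrier_mat r k" using B mats_over_carrier by blast
  fix i j assume "i < dim_row (B * tmap A)" "j < dim_col (B * tmap A)"
  hence ij: "i < r" "j < c" using A Bc unfolding tmap_def by auto
  have "tmap (B * A) $$ (i, j) = \<tau> (\<Sum>l\<in>{0..<k}. A $$ (l, j) * B $$ (i, l))"
    unfolding tmap_def using A Bc ij by (simp add: scalar_prod_def mult.commute)
  also have "\<dots> = (\<Sum>l\<in>{0..<k}. B $$ (i, l) * \<tau> (A $$ (l, j)))"
    unfolding tsum using B ij unfolding mats_over_def by (auto intro!: sum.cong simp: tlin mult.commute)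
  also have "\<dots> = (B * tmap A) $$ (i, j)"
    unfolding tmap_def using A Bc ij by (simp add: scalar_prod_def)
  finally show "tmap (B * A) $$ (i, j) = (B * tmap A) $$ (i, j)" .
qed (use assms mats_over_carrier in \<open>auto simp: tmap_def\<close>)

lemma intertwiner_over_E:
  assumes X: "\<forall>n\<in>N. X n \<in> mats_over E m m" and X': "\<forall>n\<in>N. X' n \<in> mats_over E m m"
    and P: "P \<in> carrier_mat m m" and int: "\<forall>n\<in>N. P * X n = X' n * P"
    and w: "\<tau> w \<noteq> 0" and Pij: "i < m" "j < m" "P $$ (i, j) \<noteq> 0"
  shows "\<exists>Q. Q \<in> mats_over E m m \<and> Q \<noteq> 0\<^sub>m m m \<and> (\<forall>n\<in>N. Q * X n = X' n * Q)"
proof -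
  define z where "z = w / P $$ (i, j)"
  define Q where "Q = tmap (z \<cdot>\<^sub>m P)"
  have "Q \<in> mats_over E m m" unfolding Q_def using tmap_over[of "z \<cdot>\<^sub>m P"] P by simp
  moreover have "Q \<noteq> 0\<^sub>m m m"
  proof
    assume "Q = 0\<^sub>m m m"
    hence "Q $$ (i, j) = 0" using Pij by simp
    moreover have "Q $$ (i, j) = \<tau> w" unfolding Q_def tmap_def z_def using P Pij by simp
    ultimately show False using w by simp
  qed
  moreover have "Q * X n = X' n * Q" if n: "n \<in> N" for n
  proof -
    have Xc: "X n \<in> carrier_mat m m" "X' n \<in> carrier_mat m m"
      using X X' n mats_over_carrier by blast+
    have "Q * X n = tmap ((z \<cdot>\<^sub>m P) * X n)"
      unfolding Q_def using tmap_mult_right[of "z \<cdot>\<^sub>m P" m m "X n" m] P X n by simp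
    also have "(z \<cdot>\<^sub>m P) * X n = z \<cdot>\<^sub>m (P * X n)" using mult_smult_assoc_mat P Xc by blast
    also have "\<dots> = z \<cdot>\<^sub>m (X' n * P)" using int n by simp
    also have "\<dots> = X' n * (z \<cdot>\<^sub>m P)" using mult_smult_distrib P Xc by metis
    also have "tmap (X' n * (z \<cdot>\<^sub>m P)) = X' n * Q"
      unfolding Q_def using tmap_mult_left[of "X' n" m m "z \<cdot>\<^sub>m P" m] P X' n by simp
    finally show ?thesis .
  qed
  ultimately show ?thesis by blast
qed

end

lemma nonzero_entry: "P \<in> carrier_mat m m \<Longrightarrow> P \<noteq> 0\<^sub>m m m \<Longrightarrow> \<exists>i j. i < m \<and> j < m \<and> P $$ (i, j) \<noteq> 0"
  by (metis eq_matI carrier_matD index_zero_mat(1) index_zero_mat(2) index_zero_mat(3))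

lemma invertible_nonzero:
  fixes P :: "'a::field mat"
  shows "P \<in> carrier_mat m m \<Longrightarrow> Pinv \<in> carrier_mat m m \<Longrightarrow> P * Pinv = 1\<^sub>m m \<Longrightarrow> 0 < m \<Longrightarrow> P \<noteq> 0\<^sub>m m m"
proof
  assume "P \<in> carrier_mat m m" "Pinv \<in> carrier_mat m m" "P * Pinv = 1\<^sub>m m" "0 < m" "P = 0\<^sub>m m m"
  hence "1\<^sub>m m = (0\<^sub>m m m :: 'a mat)" by simp
  hence "(1\<^sub>m m :: 'a mat) $$ (0, 0) = 0" using \<open>0 < m\<close> by (metis index_zero_mat(1))
  thus False using \<open>0 < m\<close> by simp
qed


lemma smult_smult_mat: "a \<cdot>\<^sub>m (b \<cdot>\<^sub>m A) = (a * b :: 'a::comm_ring) \<cdot>\<^sub>m A"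
  by (rule eq_matI) (auto simp: mult.assoc)

lemma smult_prod_mat:
  assumes "A \<in> carrier_mat m m" "B \<in> carrier_mat m m"
  shows "(a \<cdot>\<^sub>m A) * (b \<cdot>\<^sub>m B) = (a * b :: 'a::comm_ring) \<cdot>\<^sub>m (A * B)"
proof -
  have "(a \<cdot>\<^sub>m A) * (b \<cdot>\<^sub>m B) = a \<cdot>\<^sub>m (A * (b \<cdot>\<^sub>m B))"
    by (rule mult_smult_assoc_mat) (use assms in auto)
  also have "A * (b \<cdot>\<^sub>m B) = b \<cdot>\<^sub>m (A * B)" by (rule mult_smult_distrib) (use assms in auto)
  finally show ?thesis by (simp add: smult_smult_mat)
qed

lemma inv_smult_one: "(d::'a::field) \<noteq> 0 \<Longrightarrow> inverse d \<cdot>\<^sub>m (d \<cdot>\<^sub>m 1\<^sub>m m) = 1\<^sub>m m"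
  by (simp add: smult_smult_mat, intro eq_matI, auto)

lemma descent:
  fixes X X' :: "'g \<Rightarrow> 'f::field mat"
  assumes tm: "trace_map E \<tau>" and w: "\<tau> w \<noteq> 0" and mpos: "0 < m"
    and X: "\<forall>n\<in>N. X n \<in> mats_over E m m" and X': "\<forall>n\<in>N. X' n \<in> mats_over E m m"
    and P: "P \<in> carrier_mat m m" "Pinv \<in> carrier_mat m m" "P * Pinv = 1\<^sub>m m" "Pinv * P = 1\<^sub>m m"
    and XX': "\<forall>n\<in>N. X' n = P * X n * Pinv"
    and split: "\<forall>M\<in>carrier_mat m m. (\<forall>n\<in>N. M * X n = X n * M) \<longrightarrow> (\<exists>c. M = c \<cdot>\<^sub>m 1\<^sub>m m)"
  shows "\<exists>Q Qi. Q \<in> mats_over E m m \<and> Qi \<in> mats_over E m m \<and> Q * Qi = 1\<^sub>m m \<and> Qi * Q = 1\<^sub>m m \<and>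
     (\<forall>n\<in>N. Q * X n * Qi = X' n)"
proof -
  interpret trace_map E \<tau> by (rule tm)
  have Xc: "X n \<in> carrier_mat m m" "X' n \<in> carrier_mat m m" if "n \<in> N" for n
    using X X' that mats_over_carrier by blast+
  have int1: "P * X n = X' n * P" if n: "n \<in> N" for n
  proof -
    have "X' n * P = P * X n * (Pinv * P)" using XX' n P Xc[OF n] by (simp add: assoc_mult_mat[of _ m m _ m _ m])
    thus ?thesis using P Xc[OF n] by simp
  qed
  have int2: "Pinv * X' n = X n * Pinv" if n: "n \<in> N" for n
  proof -
    have "Pinv * X' n = Pinv * (P * (X n * Pinv))" using XX' n P Xc[OF n] by (simp add: assoc_mult_mat[of _ m m _ m _ m])
    also have "\<dots> = (Pinv * P) * (X n * Pinv)"
      by (rule assoc_mult_mat[symmetric, of _ m m _ m _ m]) (use P Xc[OF n] in auto)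
    finally show ?thesis using P Xc[OF n] by simp
  qed
  obtain i j where ij: "i < m" "j < m" "P $$ (i, j) \<noteq> 0"
    using nonzero_entry[OF P(1) invertible_nonzero[OF P(1,2,3) mpos]] by blast
  obtain Q0 where Q0: "Q0 \<in> mats_over E m m" "Q0 \<noteq> 0\<^sub>m m m" "\<forall>n\<in>N. Q0 * X n = X' n * Q0"
    using intertwiner_over_E[OF X X' P(1) _ w ij] int1 by blast
  obtain i' j' where ij': "i' < m" "j' < m" "Pinv $$ (i', j') \<noteq> 0"
    using nonzero_entry[OF P(2) invertible_nonzero[OF P(2,1,4) mpos]] by blast
  obtain Q1 where Q1: "Q1 \<in> mats_over E m m" "Q1 \<noteq> 0\<^sub>m m m" "\<forall>n\<in>N. Q1 * X' n = X n * Q1"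
    using intertwiner_over_E[OF X' X P(2) _ w ij'] int2 by blast
  have Q0c: "Q0 \<in> carrier_mat m m" and Q1c: "Q1 \<in> carrier_mat m m" using Q0 Q1 mats_over_carrier by blast+
  have "\<forall>n\<in>N. (Pinv * Q0) * X n = X n * (Pinv * Q0)"
  proof
    fix n assume n: "n \<in> N"
    have "(Pinv * Q0) * X n = Pinv * (Q0 * X n)" using P Q0c Xc[OF n] by (simp add: assoc_mult_mat[of _ m m _ m _ m])
    also have "\<dots> = (Pinv * X' n) * Q0" using Q0(3) n P Q0c Xc[OF n] by (simp add: assoc_mult_mat[of _ m m _ m _ m])
    also have "\<dots> = X n * (Pinv * Q0)" using int2[OF n] P Q0c Xc[OF n] by (simp add: assoc_mult_mat[of _ m m _ m _ m])
    finally show "(Pinv * Q0) * X n = X n * (Pinv * Q0)" .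
  qed
  then obtain c where c: "Pinv * Q0 = c \<cdot>\<^sub>m 1\<^sub>m m" using split P Q0c by (meson mult_carrier_mat)
  have Q0e: "Q0 = c \<cdot>\<^sub>m P"
  proof -
    have "Q0 = (P * Pinv) * Q0" using P Q0c by simp
    also have "\<dots> = P * (Pinv * Q0)" by (rule assoc_mult_mat) (use P Q0c in auto)
    also have "\<dots> = P * (c \<cdot>\<^sub>m 1\<^sub>m m)" using c by simp
    also have "\<dots> = c \<cdot>\<^sub>m P" using P mult_smult_distrib[of P m m "1\<^sub>m m" m c] by simp
    finally show ?thesis .
  qed
  have "\<forall>n\<in>N. (Q1 * P) * X n = X n * (Q1 * P)"
  proof
    fix n assume n: "n \<in> N"
    have "(Q1 * P) * X n = Q1 * (P * X n)" using P Q1c Xc[OF n] by (simp add: assoc_mult_mat[of _ m m _ m _ m])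
    also have "\<dots> = (Q1 * X' n) * P" using int1[OF n] P Q1c Xc[OF n] by (simp add: assoc_mult_mat[of _ m m _ m _ m])
    also have "\<dots> = X n * (Q1 * P)" using Q1(3) n P Q1c Xc[OF n] by (simp add: assoc_mult_mat[of _ m m _ m _ m])
    finally show "(Q1 * P) * X n = X n * (Q1 * P)" .
  qed
  then obtain c' where c': "Q1 * P = c' \<cdot>\<^sub>m 1\<^sub>m m" using split P Q1c by (meson mult_carrier_mat)
  have Q1e: "Q1 = c' \<cdot>\<^sub>m Pinv"
  proof -
    have "Q1 = Q1 * (P * Pinv)" using P Q1c by simp
    also have "\<dots> = (Q1 * P) * Pinv" by (rule assoc_mult_mat[symmetric]) (use P Q1c in auto)
    also have "\<dots> = (c' \<cdot>\<^sub>m 1\<^sub>m m) * Pinv" using c' by simp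
    also have "\<dots> = c' \<cdot>\<^sub>m Pinv" using P mult_smult_assoc_mat[of "1\<^sub>m m" m m Pinv m c'] by simp
    finally show ?thesis .
  qed
  have cnz: "c \<noteq> 0" using Q0(2) Q0e P by auto
  have c'nz: "c' \<noteq> 0" using Q1(2) Q1e P by auto
  have p10: "Q1 * Q0 = (c' * c) \<cdot>\<^sub>m 1\<^sub>m m"
    unfolding Q0e Q1e using P by (simp add: smult_prod_mat)
  have p01: "Q0 * Q1 = (c' * c) \<cdot>\<^sub>m 1\<^sub>m m"
    unfolding Q0e Q1e using P by (simp add: smult_prod_mat mult.commute)
  have sub: "0 \<in> E" "\<And>x y. x \<in> E \<Longrightarrow> y \<in> E \<Longrightarrow> x + y \<in> E" "\<And>x y. x \<in> E \<Longrightarrow> y \<in> E \<Longrightarrow> x * y \<in> E"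
    using subfieldD[OF sfE] by auto
  have "Q1 * Q0 \<in> mats_over E m m" using mats_over_mult[OF sub Q1(1) Q0(1)] .
  hence "(Q1 * Q0) $$ (0, 0) \<in> E" using mpos unfolding mats_over_def by auto
  hence dE: "c' * c \<in> E" using p10 mpos by simp
  define Qi where "Qi = inverse (c' * c) \<cdot>\<^sub>m Q1"
  have Qi: "Qi \<in> mats_over E m m" unfolding Qi_def using Q1(1) subfieldD(6)[OF sfE dE] subfieldD[OF sfE]
    unfolding mats_over_def by auto
  have Qic: "Qi \<in> carrier_mat m m" using Qi mats_over_carrier by blast
  have r1: "Q0 * Qi = 1\<^sub>m m"
  proof -
    have "Q0 * Qi = inverse (c' * c) \<cdot>\<^sub>m (Q0 * Q1)" unfolding Qi_def using Q0c Q1c by (simp add: mult_smult_distrib)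
    thus ?thesis using p01 inv_smult_one[of "c' * c" m] cnz c'nz by simp
  qed
  have r2: "Qi * Q0 = 1\<^sub>m m"
  proof -
    have "Qi * Q0 = inverse (c' * c) \<cdot>\<^sub>m (Q1 * Q0)" unfolding Qi_def using Q0c Q1c by (simp add: mult_smult_assoc_mat)
    thus ?thesis using p10 inv_smult_one[of "c' * c" m] cnz c'nz by simp
  qed
  have "\<forall>n\<in>N. Q0 * X n * Qi = X' n"
  proof
    fix n assume n: "n \<in> N"
    have "Q0 * X n * Qi = X' n * (Q0 * Qi)" using Q0(3) n Q0c Qic Xc[OF n] by (simp add: assoc_mult_mat[of _ m m _ m _ m])
    thus "Q0 * X n * Qi = X' n" using r1 Xc[OF n] by simp
  qed
  thus ?thesis using Q0(1) Qi r1 r2 by blast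
qed


lemma inv_exists:
  assumes "A \<in> carrier_mat n n" "invertible_mat A"
  shows "\<exists>B. B \<in> carrier_mat n n \<and> A * B = 1\<^sub>m n \<and> B * A = 1\<^sub>m n"
proof -
  obtain B where B: "A * B = 1\<^sub>m (dim_row A)" "B * A = 1\<^sub>m (dim_row B)"
    using assms(2) unfolding invertible_mat_def inverts_mat_def by blast
  have r: "dim_row A = n" "dim_col A = n" using assms(1) by auto
  have "dim_col B = n" using arg_cong[OF B(1), of dim_col] r by simp
  moreover have "dim_row B = n" using arg_cong[OF B(2), of dim_col] r by simp
  ultimately show ?thesis using B r by (auto intro!: exI[of _ B] carrier_matI)
qed

lemma (in emb_setup) V_finite: "finite V"
proof -
  have "card (prime_subfield :: 'f set) > 0" using prime_subfield_0 by (auto simp: card_gt_0_iff)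
  hence "card V > 0" using card_vecs_over[of "prime_subfield :: 'f set" "m * s"] by simp
  thus "finite V" using card_gt_0_iff by blast
qed

lemma (in emb_setup) inv_maps_V:
  assumes A: "A \<in> mats_over prime_subfield (m * s) (m * s)" and B: "B \<in> carrier_mat (m * s) (m * s)"
    and AB: "B * A = 1\<^sub>m (m * s)" and w: "w \<in> V"
  shows "B *\<^sub>v w \<in> V"
proof -
  have Ac: "A \<in> carrier_mat (m * s) (m * s)" using A mats_over_carrier by blast
  have inj: "inj_on (\<lambda>u. A *\<^sub>v u) V"
  proof
    fix u u' assume uu: "u \<in> V" "u' \<in> V" "A *\<^sub>v u = A *\<^sub>v u'"
    have "u = (B * A) *\<^sub>v u" using AB vecs_over_carrier[OF uu(1)] by simp
    also have "\<dots> = B *\<^sub>v (A *\<^sub>v u)" using Ac B vecs_over_carrier[OF uu(1)] by simp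
    also have "\<dots> = B *\<^sub>v (A *\<^sub>v u')" using uu(3) by simp
    also have "\<dots> = (B * A) *\<^sub>v u'" using Ac B vecs_over_carrier[OF uu(2)] by simp
    also have "\<dots> = u'" using AB vecs_over_carrier[OF uu(2)] by simp
    finally show "u = u'" .
  qed
  have sub: "(\<lambda>u. A *\<^sub>v u) ` V \<subseteq> V" using V_mult[OF A] by blast
  have "(\<lambda>u. A *\<^sub>v u) ` V = V"
    using card_image[OF inj] V_finite sub by (intro card_subset_eq) auto
  then obtain u where u: "u \<in> V" "w = A *\<^sub>v u" using w by force
  have "B *\<^sub>v w = (B * A) *\<^sub>v u" using u Ac B vecs_over_carrier[OF u(1)] by simp
  also have "\<dots> = u" using AB vecs_over_carrier[OF u(1)] by simp
  finally show ?thesis using u by simp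
qed

lemma sig_scalar:
  assumes sig: "field_aut E \<sigma>" and sfE: "subfield E" and d: "d \<in> E"
    and T: "T \<in> carrier_mat m m" "Ti \<in> carrier_mat m m" "Ti * T = 1\<^sub>m m"
  shows "Ti * map_mat \<sigma> (d \<cdot>\<^sub>m 1\<^sub>m m) * T = \<sigma> d \<cdot>\<^sub>m 1\<^sub>m m"
proof -
  have E0: "0 \<in> E" using subfieldD[OF sfE] by simp
  have "\<sigma> (0 + 0) = \<sigma> 0 + \<sigma> 0" using sig E0 unfolding field_aut_def by blast
  hence s0: "\<sigma> 0 = 0" by (metis add_cancel_right_right add_0)
  have "map_mat \<sigma> (d \<cdot>\<^sub>m 1\<^sub>m m) = \<sigma> d \<cdot>\<^sub>m 1\<^sub>m m" by (rule eq_matI) (auto simp: s0)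
  moreover have "Ti * (\<sigma> d \<cdot>\<^sub>m 1\<^sub>m m) = \<sigma> d \<cdot>\<^sub>m Ti" using T mult_smult_distrib[of Ti m m "1\<^sub>m m" m] by simp
  moreover have "(\<sigma> d \<cdot>\<^sub>m Ti) * T = \<sigma> d \<cdot>\<^sub>m 1\<^sub>m m" using T mult_smult_assoc_mat[of Ti m m T m] by simp
  ultimately show ?thesis by simp
qed


lemma core:
  fixes G :: "('g, 'b) monoid_scheme" and N :: "'g set" and E :: "'f::{field,finite} set"
    and X X' :: "'g \<Rightarrow> 'f mat" and \<iota> \<iota>' :: "'f mat \<Rightarrow> 'f mat" and Y Y' :: "'g \<Rightarrow> 'f mat"
    and sig :: "'g \<Rightarrow> 'f \<Rightarrow> 'f" and \<alpha> \<alpha>' :: "'g \<Rightarrow> 'g \<Rightarrow> 'f"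
  assumes Aemb: "emb_setup E m s p \<iota>" and Bemb: "emb_setup E m s p \<iota>'"
    and grp: "group G" and Nsub: "N \<subseteq> carrier G"
    and Nconj: "\<forall>g\<in>carrier G. \<forall>n\<in>N. g \<otimes>\<^bsub>G\<^esub> n \<otimes>\<^bsub>G\<^esub> inv\<^bsub>G\<^esub> g \<in> N"
    and X: "\<forall>n\<in>N. X n \<in> mats_over E m m" and X': "\<forall>n\<in>N. X' n \<in> mats_over E m m"
    and Q: "Q \<in> mats_over E m m" "Qi \<in> mats_over E m m" "Q * Qi = 1\<^sub>m m" "Qi * Q = 1\<^sub>m m"
      "\<forall>n\<in>N. Q * X n * Qi = X' n"
    and split: "\<forall>M\<in>carrier_mat m m. (\<forall>n\<in>N. M * X n = X n * M) \<longrightarrow> (\<exists>c. M = c \<cdot>\<^sub>m 1\<^sub>m m)"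
    and Yo: "\<forall>g\<in>carrier G. Y g \<in> mats_over prime_subfield (m * s) (m * s) \<and> invertible_mat (Y g)"
    and Y'o: "\<forall>g\<in>carrier G. Y' g \<in> mats_over prime_subfield (m * s) (m * s) \<and> invertible_mat (Y' g)"
    and sigb: "\<forall>g\<in>carrier G. sig g ` E = E"
    and Ysig: "\<forall>g\<in>carrier G. \<forall>d\<in>E. \<iota> (d \<cdot>\<^sub>m 1\<^sub>m m) * Y g = Y g * \<iota> (sig g d \<cdot>\<^sub>m 1\<^sub>m m)"
    and Y'sig: "\<forall>g\<in>carrier G. \<forall>d\<in>E. \<iota>' (d \<cdot>\<^sub>m 1\<^sub>m m) * Y' g = Y' g * \<iota>' (sig g d \<cdot>\<^sub>m 1\<^sub>m m)"
    and YN: "\<forall>n\<in>N. Y n = \<iota> (X n)" and Y'N: "\<forall>n\<in>N. Y' n = \<iota>' (X' n)"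
    and Ymul: "\<forall>g\<in>carrier G. \<forall>n\<in>N. Y (g \<otimes>\<^bsub>G\<^esub> n) = Y g * Y n \<and> Y (n \<otimes>\<^bsub>G\<^esub> g) = Y n * Y g"
    and Y'mul: "\<forall>g\<in>carrier G. \<forall>n\<in>N. Y' (g \<otimes>\<^bsub>G\<^esub> n) = Y' g * Y' n \<and> Y' (n \<otimes>\<^bsub>G\<^esub> g) = Y' n * Y' g"
    and al: "\<forall>g\<in>carrier G. \<forall>h\<in>carrier G. \<alpha> g h \<in> E - {0} \<and>
           Y g * Y h = Y (g \<otimes>\<^bsub>G\<^esub> h) * \<iota> (\<alpha> g h \<cdot>\<^sub>m 1\<^sub>m m)"
    and al': "\<forall>g\<in>carrier G. \<forall>h\<in>carrier G. \<alpha>' g h \<in> E - {0} \<and>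
           Y' g * Y' h = Y' (g \<otimes>\<^bsub>G\<^esub> h) * \<iota>' (\<alpha>' g h \<cdot>\<^sub>m 1\<^sub>m m)"
  shows "\<exists>\<gamma>. (\<forall>g\<in>carrier G. \<gamma> g \<in> E - {0} \<and> (\<forall>n\<in>N. \<gamma> (g \<otimes>\<^bsub>G\<^esub> n) = \<gamma> g)) \<and>
           (\<forall>g\<in>carrier G. \<forall>h\<in>carrier G.
              \<alpha>' g h = \<alpha> g h * sig h (\<gamma> g) * \<gamma> h * inverse (\<gamma> (g \<otimes>\<^bsub>G\<^esub> h)))"
proof -
  interpret A: emb_setup E m s p \<iota> by (rule Aemb)
  interpret B: emb_setup E m s p \<iota>' by (rule Bemb)
  interpret AB: two_emb E m s p \<iota> \<iota>' by (intro two_emb.intro Aemb Bemb)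
  interpret BA: two_emb E m s p \<iota>' \<iota> by (intro two_emb.intro Aemb Bemb)
  interpret G: group G by (rule grp)
  define C :: "'f mat set" where "C = carrier_mat (m * s) (m * s)"
  have as: "A * B * D = A * (B * D)" if "A \<in> C" "B \<in> C" "D \<in> C" for A B D
    using that unfolding C_def by (rule assoc_mult_mat)
  have mC: "A * B \<in> C" if "A \<in> C" "B \<in> C" for A B using that unfolding C_def by simp
  have oneL: "1\<^sub>m (m * s) * A = A" and oneR: "A * 1\<^sub>m (m * s) = A" if "A \<in> C" for A
    using that unfolding C_def by simp_all
  have ic: "\<iota> x \<in> C" "\<iota>' x \<in> C" if "x \<in> mats_over E m m" for x
    using A.iota_carrier B.iota_carrier that unfolding C_def by auto
  have sc: "d \<cdot>\<^sub>m 1\<^sub>m m \<in> mats_over E m m" if "d \<in> E" for d using A.ME_scalar that .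
  have Yc: "Y g \<in> C" "Y' g \<in> C" if "g \<in> carrier G" for g
    using Yo Y'o that mats_over_carrier unfolding C_def by blast+
  obtain U where U: "U \<in> mats_over prime_subfield (m * s) (m * s)"
    "\<forall>y\<in>vecs_over E m. U *\<^sub>v A.psi y = B.psi (Q *\<^sub>v y)"
    using AB.transport_psi[OF Q(1)] by blast
  obtain Ui where Ui: "Ui \<in> mats_over prime_subfield (m * s) (m * s)"
    "\<forall>y\<in>vecs_over E m. Ui *\<^sub>v B.psi y = A.psi (Qi *\<^sub>v y)"
    using BA.transport_psi[OF Q(2)] by blast
  have UC: "U \<in> C" "Ui \<in> C" using U(1) Ui(1) mats_over_carrier unfolding C_def by blast+
  have QQ: "Qi *\<^sub>v (Q *\<^sub>v y) = y" "Q *\<^sub>v (Qi *\<^sub>v y) = y" if "y \<in> vecs_over E m" for y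
  proof -
    have c: "Q \<in> carrier_mat m m" "Qi \<in> carrier_mat m m" "y \<in> carrier_vec m"
      using Q(1,2) mats_over_carrier vecs_over_carrier[OF that] by auto
    show "Qi *\<^sub>v (Q *\<^sub>v y) = y" using c Q(4) assoc_mult_mat_vec[of Qi m m Q m y] by simp
    show "Q *\<^sub>v (Qi *\<^sub>v y) = y" using c Q(3) assoc_mult_mat_vec[of Q m m Qi m y] by simp
  qed
  have UiU: "Ui * U = 1\<^sub>m (m * s)"
  proof (rule A.mat_eq_on_psi)
    show "Ui * U \<in> carrier_mat (m * s) (m * s)" "1\<^sub>m (m * s) \<in> carrier_mat (m * s) (m * s)"
      using UC unfolding C_def by auto
    fix y assume y: "y \<in> vecs_over E m"
    have "(Ui * U) *\<^sub>v A.psi y = Ui *\<^sub>v (U *\<^sub>v A.psi y)" using UC A.psi_carrier[OF y] unfolding C_def by simp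
    also have "\<dots> = A.psi y" using U(2) Ui(2) y A.Ec_mult[OF Q(1) y] QQ[OF y] by simp
    finally show "(Ui * U) *\<^sub>v A.psi y = 1\<^sub>m (m * s) *\<^sub>v A.psi y" using A.psi_carrier[OF y] by simp
  qed
  have UUi: "U * Ui = 1\<^sub>m (m * s)"
  proof (rule B.mat_eq_on_psi)
    show "U * Ui \<in> carrier_mat (m * s) (m * s)" "1\<^sub>m (m * s) \<in> carrier_mat (m * s) (m * s)"
      using UC unfolding C_def by auto
    fix y assume y: "y \<in> vecs_over E m"
    have "(U * Ui) *\<^sub>v B.psi y = U *\<^sub>v (Ui *\<^sub>v B.psi y)" using UC B.psi_carrier[OF y] unfolding C_def by simp
    also have "\<dots> = B.psi y" using U(2) Ui(2) y A.Ec_mult[OF Q(2) y] QQ[OF y] by simp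
    finally show "(U * Ui) *\<^sub>v B.psi y = 1\<^sub>m (m * s) *\<^sub>v B.psi y" using B.psi_carrier[OF y] by simp
  qed
  have Uint: "U * \<iota> x = \<iota>' (Q * x * Qi) * U" if "x \<in> mats_over E m m" for x
    using AB.transport_intertw[OF Q(1,2,4) U that] .
  have Uiint: "Ui * \<iota>' x = \<iota> (Qi * x * Q) * Ui" if "x \<in> mats_over E m m" for x
    using BA.transport_intertw[OF Q(2,1,3) Ui that] .
  have Qc: "Q \<in> carrier_mat m m" "Qi \<in> carrier_mat m m" using Q(1,2) mats_over_carrier by auto
  have UX: "U * Y n = Y' n * U" if n: "n \<in> N" for n
    using Uint[of "X n"] X Q(5) YN Y'N n by simp
  have UiX: "Ui * Y' n = Y n * Ui" if n: "n \<in> N" for n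
  proof -
    have Xc: "X n \<in> carrier_mat m m" using X n mats_over_carrier by blast
    have "Qi * X' n * Q = Qi * (Q * X n * Qi) * Q" using Q(5) n by simp
    also have "\<dots> = (Qi * Q) * X n * (Qi * Q)"
      using Qc Xc by (simp add: assoc_mult_mat[of _ m m _ m _ m])
    finally have "Qi * X' n * Q = X n" using Q(4) Xc by simp
    thus ?thesis using Uiint[of "X' n"] X' YN Y'N n by simp
  qed
  have Usc: "U * \<iota> (d \<cdot>\<^sub>m 1\<^sub>m m) = \<iota>' (d \<cdot>\<^sub>m 1\<^sub>m m) * U" if d: "d \<in> E" for d
  proof -
    have "Q * (d \<cdot>\<^sub>m 1\<^sub>m m) = d \<cdot>\<^sub>m Q"
      using Qc mult_smult_distrib[of Q m m "1\<^sub>m m" m d] by simp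
    hence "Q * (d \<cdot>\<^sub>m 1\<^sub>m m) * Qi = d \<cdot>\<^sub>m (Q * Qi)"
      using Qc mult_smult_assoc_mat[of Q m m Qi m d] by simp
    thus ?thesis using Uint[OF sc[OF d]] Q(3) by simp
  qed
  have Uisc: "Ui * \<iota>' (d \<cdot>\<^sub>m 1\<^sub>m m) = \<iota> (d \<cdot>\<^sub>m 1\<^sub>m m) * Ui" if d: "d \<in> E" for d
  proof -
    have "Qi * (d \<cdot>\<^sub>m 1\<^sub>m m) = d \<cdot>\<^sub>m Qi"
      using Qc mult_smult_distrib[of Qi m m "1\<^sub>m m" m d] by simp
    hence "Qi * (d \<cdot>\<^sub>m 1\<^sub>m m) * Q = d \<cdot>\<^sub>m (Qi * Q)"
      using Qc mult_smult_assoc_mat[of Qi m m Q m d] by simp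
    thus ?thesis using Uiint[OF sc[OF d]] Q(4) by simp
  qed
  have "\<forall>g\<in>carrier G. \<exists>B. B \<in> C \<and> Y g * B = 1\<^sub>m (m * s) \<and> B * Y g = 1\<^sub>m (m * s)"
    using inv_exists Yo Yc unfolding C_def by blast
  then obtain Yi where Yi: "\<And>g. g \<in> carrier G \<Longrightarrow> Yi g \<in> C \<and> Y g * Yi g = 1\<^sub>m (m * s) \<and> Yi g * Y g = 1\<^sub>m (m * s)"
    by metis
  have YiC: "Yi g \<in> C" and YYi: "Y g * Yi g = 1\<^sub>m (m * s)" and YiY: "Yi g * Y g = 1\<^sub>m (m * s)"
    if "g \<in> carrier G" for g using Yi[OF that] by auto
  have tYYi: "Y g * (Yi g * Z) = Z" and tYiY: "Yi g * (Y g * Z) = Z" if "g \<in> carrier G" "Z \<in> C" for g Z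
    using as[OF Yc(1)[OF that(1)] YiC[OF that(1)] that(2), symmetric]
      as[OF YiC[OF that(1)] Yc(1)[OF that(1)] that(2), symmetric] YYi[OF that(1)] YiY[OF that(1)] oneL[OF that(2)]
    by auto
  have tUUi: "U * (Ui * Z) = Z" and tUiU: "Ui * (U * Z) = Z" if "Z \<in> C" for Z
    using as[OF UC(1) UC(2) that, symmetric] as[OF UC(2) UC(1) that, symmetric] UUi UiU oneL[OF that] by auto
  have NG: "n \<in> carrier G" if "n \<in> N" for n using Nsub that by blast
  have Xi: "\<iota> (X n) \<in> C" if "n \<in> N" for n using ic X that by blast
  have YNc: "Y n \<in> C" "Y' n \<in> C" if "n \<in> N" for n using Yc NG[OF that] by auto
  have iscC: "\<iota> (d \<cdot>\<^sub>m 1\<^sub>m m) \<in> C" "\<iota>' (d \<cdot>\<^sub>m 1\<^sub>m m) \<in> C" if "d \<in> E" for d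
    using ic sc[OF that] by auto
  have sigE: "sig g d \<in> E" if "g \<in> carrier G" "d \<in> E" for g d using sigb that by blast
  have iota_sc_mult: "\<iota> (a \<cdot>\<^sub>m 1\<^sub>m m) * \<iota> (b \<cdot>\<^sub>m 1\<^sub>m m) = \<iota> ((a * b) \<cdot>\<^sub>m 1\<^sub>m m)"
    if "a \<in> E" "b \<in> E" for a b
  proof -
    have "(a \<cdot>\<^sub>m 1\<^sub>m m) * (b \<cdot>\<^sub>m 1\<^sub>m m) = (a * b) \<cdot>\<^sub>m (1\<^sub>m m * 1\<^sub>m m)"
      by (rule smult_prod_mat) auto
    thus ?thesis using A.iota_mult[OF sc[OF that(1)] sc[OF that(2)]] by simp
  qed
  have iota_sc_X: "\<iota> (a \<cdot>\<^sub>m 1\<^sub>m m) * \<iota> (X n) = \<iota> (X n) * \<iota> (a \<cdot>\<^sub>m 1\<^sub>m m)"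
    if "a \<in> E" "n \<in> N" for a n
  proof -
    have Xc: "X n \<in> carrier_mat m m" using X that(2) mats_over_carrier by blast
    have "(a \<cdot>\<^sub>m 1\<^sub>m m) * X n = X n * (a \<cdot>\<^sub>m 1\<^sub>m m)"
      using Xc mult_smult_assoc_mat[of "1\<^sub>m m" m m "X n" m a] mult_smult_distrib[of "X n" m m "1\<^sub>m m" m a] by simp
    thus ?thesis using A.iota_mult[OF sc[OF that(1)]] A.iota_mult[of "X n"] X that sc by metis
  qed
  have key: "\<exists>c\<in>E - {0}. Y' g * U = U * (Y g * \<iota> (c \<cdot>\<^sub>m 1\<^sub>m m))" if g: "g \<in> carrier G" for g
  proof -
    define W where "W = Yi g * (Ui * (Y' g * U))"
    have WC: "W \<in> C" unfolding W_def using mC YiC[OF g] UC Yc[OF g] by blast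
    have WV: "W *\<^sub>v w \<in> A.V" if w: "w \<in> A.V" for w
    proof -
      have c: "Yi g \<in> carrier_mat (m * s) (m * s)" "Ui \<in> carrier_mat (m * s) (m * s)"
        "Y' g \<in> carrier_mat (m * s) (m * s)" "U \<in> carrier_mat (m * s) (m * s)" "w \<in> carrier_vec (m * s)"
        using YiC[OF g] UC Yc[OF g] vecs_over_carrier[OF w] unfolding C_def by auto
      have "W *\<^sub>v w = Yi g *\<^sub>v ((Ui * (Y' g * U)) *\<^sub>v w)"
        unfolding W_def by (rule assoc_mult_mat_vec) (use c in auto)
      also have "(Ui * (Y' g * U)) *\<^sub>v w = Ui *\<^sub>v ((Y' g * U) *\<^sub>v w)"
        by (rule assoc_mult_mat_vec) (use c in auto)
      also have "(Y' g * U) *\<^sub>v w = Y' g *\<^sub>v (U *\<^sub>v w)"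
        by (rule assoc_mult_mat_vec) (use c in auto)
      finally have "W *\<^sub>v w = Yi g *\<^sub>v (Ui *\<^sub>v (Y' g *\<^sub>v (U *\<^sub>v w)))" .
      moreover have "U *\<^sub>v w \<in> A.V" using A.V_mult[OF U(1) w] .
      moreover hence "Y' g *\<^sub>v (U *\<^sub>v w) \<in> A.V" using A.V_mult Y'o g by blast
      moreover hence "Ui *\<^sub>v (Y' g *\<^sub>v (U *\<^sub>v w)) \<in> A.V" using A.V_mult Ui(1) by blast
      ultimately show ?thesis
        using A.inv_maps_V[of "Y g" "Yi g"] Yo g YiC[OF g] YiY[OF g] unfolding C_def by auto
    qed
    have WX: "W * \<iota> (X n) = \<iota> (X n) * W" if n: "n \<in> N" for n
    proof -
      define n' where "n' = g \<otimes>\<^bsub>G\<^esub> n \<otimes>\<^bsub>G\<^esub> inv\<^bsub>G\<^esub> g"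
      have n'N: "n' \<in> N" unfolding n'_def using Nconj g n by blast
      have gn: "g \<otimes>\<^bsub>G\<^esub> n = n' \<otimes>\<^bsub>G\<^esub> g"
        unfolding n'_def using g NG[OF n] by (simp add: G.m_assoc)
      have r1: "Y g * Y n = Y n' * Y g" using Ymul g n n'N gn by metis
      have r2: "Y' g * Y' n = Y' n' * Y' g" using Y'mul g n n'N gn by metis
      have r3: "Yi g * Y n' = Y n * Yi g"
      proof -
        have "Yi g * Y n' = Yi g * (Y n' * (Y g * Yi g))" using YYi[OF g] oneR YNc[OF n'N] by simp
        also have "\<dots> = Yi g * (Y g * (Y n * Yi g))"
          using r1 as[OF YNc(1)[OF n'N] Yc(1)[OF g] YiC[OF g], symmetric]
            as[OF Yc(1)[OF g] YNc(1)[OF n] YiC[OF g], symmetric] by simp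
        also have "\<dots> = Y n * Yi g" using tYiY[OF g] mC YNc(1)[OF n] YiC[OF g] by blast
        finally show ?thesis .
      qed
      have "W * \<iota> (X n) = Yi g * (Ui * (Y' g * (U * Y n)))"
        unfolding W_def using YN n as YiC[OF g] UC Yc[OF g] YNc[OF n] mC by simp
      also have "\<dots> = Yi g * (Ui * ((Y' g * Y' n) * U))"
        using UX[OF n] as[OF Yc(2)[OF g] YNc(2)[OF n] UC(1)] by simp
      also have "\<dots> = Yi g * ((Ui * Y' n') * (Y' g * U))"
        using r2 as[OF YNc(2)[OF n'N] Yc(2)[OF g] UC(1)] as[OF UC(2) YNc(2)[OF n'N]] mC Yc[OF g] UC by simp
      also have "\<dots> = (Yi g * Y n') * (Ui * (Y' g * U))"
        using UiX[OF n'N] as[OF YNc(1)[OF n'N] UC(2)] as[OF YiC[OF g] YNc(1)[OF n'N]] mC Yc[OF g] UC by simp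
      also have "\<dots> = Y n * W"
        unfolding W_def using r3 as[OF YNc(1)[OF n] YiC[OF g]] mC Yc[OF g] UC by simp
      finally show ?thesis using YN n by simp
    qed
    have WE: "W * \<iota> (c \<cdot>\<^sub>m 1\<^sub>m m) = \<iota> (c \<cdot>\<^sub>m 1\<^sub>m m) * W" if c: "c \<in> E" for c
    proof -
      obtain d where d: "d \<in> E" "c = sig g d" using sigb g c by blast
      have r3: "Yi g * \<iota> (d \<cdot>\<^sub>m 1\<^sub>m m) = \<iota> (c \<cdot>\<^sub>m 1\<^sub>m m) * Yi g"
      proof -
        have "Yi g * \<iota> (d \<cdot>\<^sub>m 1\<^sub>m m) = Yi g * (\<iota> (d \<cdot>\<^sub>m 1\<^sub>m m) * (Y g * Yi g))"
          using YYi[OF g] oneR iscC[OF d(1)] by simp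
        also have "\<dots> = Yi g * (Y g * (\<iota> (c \<cdot>\<^sub>m 1\<^sub>m m) * Yi g))"
          using Ysig g d as[OF iscC(1)[OF d(1)] Yc(1)[OF g] YiC[OF g], symmetric]
            as[OF Yc(1)[OF g] iscC(1)[OF c] YiC[OF g], symmetric] by simp
        also have "\<dots> = \<iota> (c \<cdot>\<^sub>m 1\<^sub>m m) * Yi g" using tYiY[OF g] mC iscC(1)[OF c] YiC[OF g] by blast
        finally show ?thesis .
      qed
      have "W * \<iota> (c \<cdot>\<^sub>m 1\<^sub>m m) = Yi g * (Ui * (Y' g * (U * \<iota> (c \<cdot>\<^sub>m 1\<^sub>m m))))"
        unfolding W_def using as YiC[OF g] UC Yc[OF g] iscC[OF c] mC by simp
      also have "\<dots> = Yi g * (Ui * ((Y' g * \<iota>' (c \<cdot>\<^sub>m 1\<^sub>m m)) * U))"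
        using Usc[OF c] as[OF Yc(2)[OF g] iscC(2)[OF c] UC(1)] by simp
      also have "\<dots> = Yi g * ((Ui * \<iota>' (d \<cdot>\<^sub>m 1\<^sub>m m)) * (Y' g * U))"
        using Y'sig g d as[OF iscC(2)[OF d(1)] Yc(2)[OF g] UC(1)] as[OF UC(2) iscC(2)[OF d(1)]] mC Yc[OF g] UC
        by simp
      also have "\<dots> = (Yi g * \<iota> (d \<cdot>\<^sub>m 1\<^sub>m m)) * (Ui * (Y' g * U))"
        using Uisc[OF d(1)] as[OF iscC(1)[OF d(1)] UC(2)] as[OF YiC[OF g] iscC(1)[OF d(1)]] mC Yc[OF g] UC by simp
      also have "\<dots> = \<iota> (c \<cdot>\<^sub>m 1\<^sub>m m) * W"
        unfolding W_def using r3 as[OF iscC(1)[OF c] YiC[OF g]] mC Yc[OF g] UC by simp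
      finally show ?thesis .
    qed
    obtain c where c: "c \<in> E" "W = \<iota> (c \<cdot>\<^sub>m 1\<^sub>m m)"
      using A.centralizer[of W N X] WC WV WE X WX split unfolding C_def by blast
    have eq: "Y' g * U = U * (Y g * W)"
    proof -
      have "U * (Y g * W) = U * (Ui * (Y' g * U))" unfolding W_def using tYYi[OF g] mC UC Yc[OF g] by simp
      also have "\<dots> = Y' g * U" using tUUi mC UC Yc[OF g] by blast
      finally show ?thesis by simp
    qed
    have "c \<noteq> 0"
    proof
      assume "c = 0"
      moreover have "0 \<cdot>\<^sub>m 1\<^sub>m m = (0\<^sub>m m m :: 'f mat)" by (rule eq_matI) auto
      ultimately have "W = 0\<^sub>m (m * s) (m * s)" using c A.iota_zero by simp
      hence "Y' g * U = 0\<^sub>m (m * s) (m * s)" using eq Yc[OF g] UC unfolding C_def by simp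
      hence "Y' g = 0\<^sub>m (m * s) (m * s) * Ui"
        using as[OF Yc(2)[OF g] UC(1) UC(2)] UUi oneR[OF Yc(2)[OF g]] by simp
      hence "Y' g = 0\<^sub>m (m * s) (m * s)" using UC unfolding C_def by simp
      moreover obtain B where "B \<in> carrier_mat (m * s) (m * s)" "Y' g * B = 1\<^sub>m (m * s)"
        using inv_exists Y'o g Yc(2)[OF g] unfolding C_def by blast
      ultimately show False using invertible_nonzero A.ms_pos Yc(2)[OF g] unfolding C_def by blast
    qed
    thus ?thesis using c eq by blast
  qed
  have "\<forall>g\<in>carrier G. \<exists>c. c \<in> E - {0} \<and> Y' g * U = U * (Y g * \<iota> (c \<cdot>\<^sub>m 1\<^sub>m m))"
    using key by blast
  from bchoice[OF this] obtain \<gamma> where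
    gam0: "\<forall>g\<in>carrier G. \<gamma> g \<in> E - {0} \<and> Y' g * U = U * (Y g * \<iota> (\<gamma> g \<cdot>\<^sub>m 1\<^sub>m m))" by blast
  have gam: "\<gamma> g \<in> E - {0} \<and> Y' g * U = U * (Y g * \<iota> (\<gamma> g \<cdot>\<^sub>m 1\<^sub>m m))" if "g \<in> carrier G" for g
    using gam0 that by blast
  have cancel: "a = b" if g: "g \<in> carrier G" and ab: "a \<in> E" "b \<in> E"
    and e: "U * (Y g * \<iota> (a \<cdot>\<^sub>m 1\<^sub>m m)) = U * (Y g * \<iota> (b \<cdot>\<^sub>m 1\<^sub>m m))" for g a b
  proof -
    have "Yi g * (Ui * (U * (Y g * \<iota> (a \<cdot>\<^sub>m 1\<^sub>m m)))) = Yi g * (Ui * (U * (Y g * \<iota> (b \<cdot>\<^sub>m 1\<^sub>m m))))"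
      using e by simp
    hence "\<iota> (a \<cdot>\<^sub>m 1\<^sub>m m) = \<iota> (b \<cdot>\<^sub>m 1\<^sub>m m)"
      using tUiU tYiY[OF g] mC Yc(1)[OF g] iscC(1) ab by metis
    hence "a \<cdot>\<^sub>m 1\<^sub>m m = b \<cdot>\<^sub>m 1\<^sub>m m" using A.iota_inj sc ab unfolding inj_on_def by blast
    hence "(a \<cdot>\<^sub>m 1\<^sub>m m) $$ (0, 0) = (b \<cdot>\<^sub>m 1\<^sub>m m :: 'f mat) $$ (0, 0)" by simp
    thus ?thesis using A.mpos by simp
  qed
  have coset: "\<gamma> (g \<otimes>\<^bsub>G\<^esub> n) = \<gamma> g" if g: "g \<in> carrier G" and n: "n \<in> N" for g n
  proof -
    have gn: "g \<otimes>\<^bsub>G\<^esub> n \<in> carrier G" using g NG[OF n] by simp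
    have gE: "\<gamma> g \<in> E" using gam[OF g] by blast
    have "Y' (g \<otimes>\<^bsub>G\<^esub> n) * U = Y' g * (Y' n * U)" using Y'mul g n as Yc[OF g] YNc[OF n] UC by simp
    also have "\<dots> = (Y' g * U) * Y n" using UX[OF n] as[OF Yc(2)[OF g] UC(1) YNc(1)[OF n]] by simp
    also have "\<dots> = U * (Y g * (\<iota> (\<gamma> g \<cdot>\<^sub>m 1\<^sub>m m) * Y n))"
      using gam[OF g] as UC Yc[OF g] iscC(1)[OF gE] YNc[OF n] mC by simp
    also have "\<dots> = U * (Y g * (Y n * \<iota> (\<gamma> g \<cdot>\<^sub>m 1\<^sub>m m)))"
      using iota_sc_X[OF gE n] YN n by simp
    also have "\<dots> = U * (Y (g \<otimes>\<^bsub>G\<^esub> n) * \<iota> (\<gamma> g \<cdot>\<^sub>m 1\<^sub>m m))"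
      using Ymul g n as[OF Yc(1)[OF g] YNc(1)[OF n] iscC(1)[OF gE]] by simp
    finally have "U * (Y (g \<otimes>\<^bsub>G\<^esub> n) * \<iota> (\<gamma> (g \<otimes>\<^bsub>G\<^esub> n) \<cdot>\<^sub>m 1\<^sub>m m)) = U * (Y (g \<otimes>\<^bsub>G\<^esub> n) * \<iota> (\<gamma> g \<cdot>\<^sub>m 1\<^sub>m m))"
      using gam[OF gn] by simp
    thus ?thesis using cancel[OF gn] gam[OF gn] gE by blast
  qed
  have cocycle: "\<alpha>' g h = \<alpha> g h * sig h (\<gamma> g) * \<gamma> h * inverse (\<gamma> (g \<otimes>\<^bsub>G\<^esub> h))"
    if g: "g \<in> carrier G" and h: "h \<in> carrier G" for g h
  proof -
    have gh: "g \<otimes>\<^bsub>G\<^esub> h \<in> carrier G" using g h by simp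
    have gE: "\<gamma> g \<in> E" and hE: "\<gamma> h \<in> E" and ghE: "\<gamma> (g \<otimes>\<^bsub>G\<^esub> h) \<in> E" "\<gamma> (g \<otimes>\<^bsub>G\<^esub> h) \<noteq> 0"
      using gam g h gh by auto
    have aE: "\<alpha> g h \<in> E" "\<alpha>' g h \<in> E" using al al' g h by auto
    have sgE: "sig h (\<gamma> g) \<in> E" using sigE[OF h gE] .
    have prodE: "sig h (\<gamma> g) * \<gamma> h \<in> E" using subfieldD(4)[OF A.sfE sgE hE] .
    have "Y' g * (Y' h * U) = (Y' g * U) * (Y h * \<iota> (\<gamma> h \<cdot>\<^sub>m 1\<^sub>m m))"
      using gam[OF h] as[OF Yc(2)[OF g] UC(1)] mC Yc[OF h] iscC(1)[OF hE] by simp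
    also have "\<dots> = U * (Y g * ((\<iota> (\<gamma> g \<cdot>\<^sub>m 1\<^sub>m m) * Y h) * \<iota> (\<gamma> h \<cdot>\<^sub>m 1\<^sub>m m)))"
      using gam[OF g] as UC Yc[OF g] Yc[OF h] iscC(1)[OF gE] iscC(1)[OF hE] mC by simp
    also have "\<dots> = U * ((Y g * Y h) * (\<iota> (sig h (\<gamma> g) \<cdot>\<^sub>m 1\<^sub>m m) * \<iota> (\<gamma> h \<cdot>\<^sub>m 1\<^sub>m m)))"
      using Ysig h gE as Yc[OF g] Yc[OF h] iscC(1)[OF sgE] iscC(1)[OF hE] mC by simp
    also have "\<dots> = U * (Y (g \<otimes>\<^bsub>G\<^esub> h) * \<iota> ((\<alpha> g h * (sig h (\<gamma> g) * \<gamma> h)) \<cdot>\<^sub>m 1\<^sub>m m))"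
      using al g h iota_sc_mult[OF sgE hE] iota_sc_mult[OF aE(1) prodE]
        as[OF Yc(1)[OF gh] iscC(1)[OF aE(1)] iscC(1)[OF prodE]] by simp
    finally have l: "Y' g * (Y' h * U) = U * (Y (g \<otimes>\<^bsub>G\<^esub> h) * \<iota> ((\<alpha> g h * (sig h (\<gamma> g) * \<gamma> h)) \<cdot>\<^sub>m 1\<^sub>m m))" .
    have "Y' g * (Y' h * U) = Y' (g \<otimes>\<^bsub>G\<^esub> h) * (\<iota>' (\<alpha>' g h \<cdot>\<^sub>m 1\<^sub>m m) * U)"
      using al' g h as Yc[OF g] Yc[OF h] Yc[OF gh] UC iscC(2)[OF aE(2)] by (metis)
    also have "\<dots> = (Y' (g \<otimes>\<^bsub>G\<^esub> h) * U) * \<iota> (\<alpha>' g h \<cdot>\<^sub>m 1\<^sub>m m)"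
      using Usc[OF aE(2)] as[OF Yc(2)[OF gh] UC(1) iscC(1)[OF aE(2)]] by simp
    also have "\<dots> = U * (Y (g \<otimes>\<^bsub>G\<^esub> h) * \<iota> ((\<gamma> (g \<otimes>\<^bsub>G\<^esub> h) * \<alpha>' g h) \<cdot>\<^sub>m 1\<^sub>m m))"
      using gam[OF gh] iota_sc_mult[OF ghE(1) aE(2)] as UC Yc[OF gh] iscC(1)[OF ghE(1)] iscC(1)[OF aE(2)] mC
      by simp
    finally have "U * (Y (g \<otimes>\<^bsub>G\<^esub> h) * \<iota> ((\<alpha> g h * (sig h (\<gamma> g) * \<gamma> h)) \<cdot>\<^sub>m 1\<^sub>m m)) =
        U * (Y (g \<otimes>\<^bsub>G\<^esub> h) * \<iota> ((\<gamma> (g \<otimes>\<^bsub>G\<^esub> h) * \<alpha>' g h) \<cdot>\<^sub>m 1\<^sub>m m))" using l by simp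
    hence "\<alpha> g h * (sig h (\<gamma> g) * \<gamma> h) = \<gamma> (g \<otimes>\<^bsub>G\<^esub> h) * \<alpha>' g h"
      using cancel[OF gh] subfieldD(4)[OF A.sfE aE(1) prodE] subfieldD(4)[OF A.sfE ghE(1) aE(2)] by blast
    thus ?thesis using ghE(2) by (simp add: field_simps)
  qed
  show ?thesis using gam coset cocycle by blast
qed


theorem mainTheorem10:
  fixes G :: "('g, 'b) monoid_scheme" and N :: "'g set" and p m s :: nat
    and E :: "'f::{field, finite} set"
    and X X' :: "'g \<Rightarrow> 'f mat" and \<iota> \<iota>' :: "'f mat \<Rightarrow> 'f mat" and Y Y' :: "'g \<Rightarrow> 'f mat"
    and sig :: "'g \<Rightarrow> 'f \<Rightarrow> 'f" and \<alpha> \<alpha>' :: "'g \<Rightarrow> 'g \<Rightarrow> 'f"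
  assumes "group G" and "finite (carrier G)" and "N \<lhd> G"
    and "prime p" and "of_nat p = (0 :: 'f)"
    and "splitting_field TYPE('f) G"
    and "irreducible_rep (G\<lparr>carrier := N\<rparr>) m X"
    and "E = generated_subfield ((\<lambda>n. mat_trace (X n)) ` N)"
    and "card E = p ^ s"
    and "\<forall>n\<in>N. X n \<in> mats_over E m m"
    and "\<forall>g\<in>carrier G. field_aut E (sig g) \<and>
           rep_equiv (G\<lparr>carrier := N\<rparr>) m X (\<lambda>n. map_mat (sig g) (X (g \<otimes>\<^bsub>G\<^esub> n \<otimes>\<^bsub>G\<^esub> inv\<^bsub>G\<^esub> g)))"
    and "rep_equiv (G\<lparr>carrier := N\<rparr>) m X X'"
    and "\<forall>n\<in>N. X' n \<in> mats_over E m m"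
    and "unital_embedding E m s \<iota>" and "unital_embedding E m s \<iota>'"
    and "Y_function G N E m s sig X \<iota> Y" and "Y_function G N E m s sig X' \<iota>' Y'"
    and "\<forall>g\<in>carrier G. \<forall>h\<in>carrier G. \<alpha> g h \<in> E - {0} \<and>
           Y g * Y h = Y (g \<otimes>\<^bsub>G\<^esub> h) * \<iota> (\<alpha> g h \<cdot>\<^sub>m 1\<^sub>m m)"
    and "\<forall>g\<in>carrier G. \<forall>h\<in>carrier G. \<alpha>' g h \<in> E - {0} \<and>
           Y' g * Y' h = Y' (g \<otimes>\<^bsub>G\<^esub> h) * \<iota>' (\<alpha>' g h \<cdot>\<^sub>m 1\<^sub>m m)"
  shows "\<exists>\<gamma>. (\<forall>g\<in>carrier G. \<gamma> g \<in> E - {0} \<and> (\<forall>n\<in>N. \<gamma> (g \<otimes>\<^bsub>G\<^esub> n) = \<gamma> g)) \<and>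
           (\<forall>g\<in>carrier G. \<forall>h\<in>carrier G.
              \<alpha>' g h = \<alpha> g h * sig h (\<gamma> g) * \<gamma> h * inverse (\<gamma> (g \<otimes>\<^bsub>G\<^esub> h)))"
proof -
  note a = assms
  have sub: "subgroup N G" using normal_imp_subgroup[OF a(3)] .
  have Nsub: "N \<subseteq> carrier G" using subgroup.subset[OF sub] .
  have Nconj: "\<forall>g\<in>carrier G. \<forall>n\<in>N. g \<otimes>\<^bsub>G\<^esub> n \<otimes>\<^bsub>G\<^esub> inv\<^bsub>G\<^esub> g \<in> N"
    using normal.inv_op_closed2[OF a(3)] by blast
  have sfE: "subfield E" using a(8) subfield_generated by simp
  have mpos: "0 < m" using a(7) unfolding irreducible_rep_def by simp
  have cardFp: "card (prime_subfield :: 'f set) = p" using card_prime_subfield[OF a(4,5)] .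
  have Aemb: "emb_setup E m s p \<iota>" by (unfold_locales) (use sfE a(14) mpos a(9) cardFp in auto)
  have Bemb: "emb_setup E m s p \<iota>'" by (unfold_locales) (use sfE a(15) mpos a(9) cardFp in auto)
  obtain \<tau> where tau: "\<forall>z. \<tau> z \<in> E" "\<forall>a b. \<tau> (a + b) = \<tau> a + \<tau> b"
      "\<forall>a. \<forall>e\<in>E. \<tau> (a * e) = \<tau> a * e" "\<exists>w. \<tau> w \<noteq> 0"
    using exists_trace_map[OF sfE a(4,5,9)] by blast
  have tm: "trace_map E \<tau>" by unfold_locales (use sfE tau in auto)
  obtain w where w: "\<tau> w \<noteq> 0" using tau(4) by blast
  obtain P Pinv where P: "P \<in> carrier_mat m m" "Pinv \<in> carrier_mat m m" "P * Pinv = 1\<^sub>m m" "Pinv * P = 1\<^sub>m m"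
    "\<forall>n\<in>N. X' n = P * X n * Pinv"
    using a(12) unfolding rep_equiv_def by auto
  have split: "\<forall>M\<in>carrier_mat m m. (\<forall>n\<in>N. M * X n = X n * M) \<longrightarrow> (\<exists>c. M = c \<cdot>\<^sub>m 1\<^sub>m m)"
    using a(6) sub a(7) unfolding splitting_field_def by blast
  obtain Q Qi where Q: "Q \<in> mats_over E m m" "Qi \<in> mats_over E m m" "Q * Qi = 1\<^sub>m m" "Qi * Q = 1\<^sub>m m"
      "\<forall>n\<in>N. Q * X n * Qi = X' n"
    using descent[OF tm w mpos a(10) a(13) P split] by blast
  have Yo: "\<forall>g\<in>carrier G. Y g \<in> mats_over prime_subfield (m * s) (m * s) \<and> invertible_mat (Y g)"
    and Y'o: "\<forall>g\<in>carrier G. Y' g \<in> mats_over prime_subfield (m * s) (m * s) \<and> invertible_mat (Y' g)"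
    using a(16,17) unfolding Y_function_def by auto
  have sigb: "\<forall>g\<in>carrier G. sig g ` E = E"
    using a(11) unfolding field_aut_def by (auto simp: bij_betw_def)
  have Ysig: "\<forall>g\<in>carrier G. \<forall>d\<in>E. \<iota> (d \<cdot>\<^sub>m 1\<^sub>m m) * Y g = Y g * \<iota> (sig g d \<cdot>\<^sub>m 1\<^sub>m m)"
  proof (intro ballI)
    fix g d assume g: "g \<in> carrier G" and d: "d \<in> E"
    obtain T Ti where T: "T \<in> mats_over E m m" "Ti \<in> mats_over E m m" "Ti * T = 1\<^sub>m m"
      "\<forall>x\<in>mats_over E m m. \<iota> x * Y g = Y g * \<iota> (Ti * map_mat (sig g) x * T)"
      using a(16) g unfolding Y_function_def by meson
    have "Ti * map_mat (sig g) (d \<cdot>\<^sub>m 1\<^sub>m m) * T = sig g d \<cdot>\<^sub>m 1\<^sub>m m"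
      using sig_scalar[of E "sig g" d T m Ti] a(11) g sfE d T mats_over_carrier by blast
    thus "\<iota> (d \<cdot>\<^sub>m 1\<^sub>m m) * Y g = Y g * \<iota> (sig g d \<cdot>\<^sub>m 1\<^sub>m m)"
      using T(4) emb_setup.ME_scalar[OF Aemb d] by simp
  qed
  have Y'sig: "\<forall>g\<in>carrier G. \<forall>d\<in>E. \<iota>' (d \<cdot>\<^sub>m 1\<^sub>m m) * Y' g = Y' g * \<iota>' (sig g d \<cdot>\<^sub>m 1\<^sub>m m)"
  proof (intro ballI)
    fix g d assume g: "g \<in> carrier G" and d: "d \<in> E"
    obtain T Ti where T: "T \<in> mats_over E m m" "Ti \<in> mats_over E m m" "Ti * T = 1\<^sub>m m"
      "\<forall>x\<in>mats_over E m m. \<iota>' x * Y' g = Y' g * \<iota>' (Ti * map_mat (sig g) x * T)"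
      using a(17) g unfolding Y_function_def by meson
    have "Ti * map_mat (sig g) (d \<cdot>\<^sub>m 1\<^sub>m m) * T = sig g d \<cdot>\<^sub>m 1\<^sub>m m"
      using sig_scalar[of E "sig g" d T m Ti] a(11) g sfE d T mats_over_carrier by blast
    thus "\<iota>' (d \<cdot>\<^sub>m 1\<^sub>m m) * Y' g = Y' g * \<iota>' (sig g d \<cdot>\<^sub>m 1\<^sub>m m)"
      using T(4) emb_setup.ME_scalar[OF Aemb d] by simp
  qed
  have YN: "\<forall>n\<in>N. Y n = \<iota> (X n)" and Y'N: "\<forall>n\<in>N. Y' n = \<iota>' (X' n)"
    and Ymul: "\<forall>g\<in>carrier G. \<forall>n\<in>N. Y (g \<otimes>\<^bsub>G\<^esub> n) = Y g * Y n \<and> Y (n \<otimes>\<^bsub>G\<^esub> g) = Y n * Y g"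
    and Y'mul: "\<forall>g\<in>carrier G. \<forall>n\<in>N. Y' (g \<otimes>\<^bsub>G\<^esub> n) = Y' g * Y' n \<and> Y' (n \<otimes>\<^bsub>G\<^esub> g) = Y' n * Y' g"
    using a(16,17) unfolding Y_function_def by auto
  show ?thesis
    by (rule core[OF Aemb Bemb a(1) Nsub Nconj a(10) a(13) Q split Yo Y'o sigb Ysig Y'sig YN Y'N
          Ymul Y'mul a(18) a(19)])
qed

end
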